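(* Fix $\epsilon>0$, $\delta>0$ and an integer $L\geq 2$ such that $2\epsilon<\delta\leq 1/L$. Then the minimum number of queries $N^*(\epsilon,\delta,L)$ of an $(\epsilon,\delta,L)$-private learner strategy satisfies \[ \max\Big\{\log\frac{1}{\epsilon},\ \log\frac{\delta}{\epsilon}+2L-4\Big\}\ \leq\ N^*(\epsilon,\delta,L)\ \leq\ \log\frac{1}{L\epsilon}+2L . \]
   Context: Private sequential learning model. An unknown true value $v^*\in[0,1)$. A learner submits queries $q_k\in[0,1)$ and receives responses $r_k=\mathbb{I}(v^*\geq q_k)$. A learner strategy $\phi$ of length $N$ uses a random seed $Y$ uniformly distributed on $\{1,2,\dots,\mathcal{Y}\}$ (for a large integer $\mathcal{Y}$) and consists of query functions $\phi_1,\dots,\phi_N$ and an estimation function $\phi^E$: $q_1=\phi_1(Y)$, $q_k=\phi_k(r_1,\dots,r_{k-1},Y)$ for $k=2,\dots,N$, and the estimate is $\hat x=\phi^E(r_1,\dots,r_N,Y)\in[0,1)$; queries within a run are distinct. $\Phi_N$ denotes the set of all such strategies of length $N$. Write $\hat x(x,y)$ for the estimate when $v^*=x$, $Y=y$. For $x\in[0,1)$, let $\mathcal{Q}(x)=\{\overline q\in[0,1)^N:\mathbb{P}(Q_x=\overline q)>0\}$, where $Q_x$ is the (random, through $Y$) query sequence when $v^*=x$. The adversary's information set for $\overline q$ is $\mathcal{I}(\overline q)=\{x\in[0,1):\overline q\in\mathcal{Q}(x)\}$. A set $\mathcal{E}\subset\mathbb{R}$ is $(\delta,L)$-coverable if it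 is contained in a union of $L$ closed intervals each of length at most $\delta$; its $\delta$-cover number $C_\delta(\mathcal{E})$ is the least $L\in\mathbb{N}$ such that $\mathcal{E}$ is $(\delta,L)$-coverable. A strategy $\phi\in\Phi_N$ is $(\epsilon,\delta,L)$-private (for $L\geq2$ integer) if (1) $\mathbb{P}(|\hat x(x,Y)-x|\leq\epsilon/2)=1$ for all $x\in[0,1)$, and (2) $C_\delta(\mathcal{I}(\overline q))\geq L$ for every $x\in[0,1)$ and every $\overline q\in\mathcal{Q}(x)$. $N^*(\epsilon,\delta,L)=\min\{N\in\mathbb{N}:\Phi_N\text{ contains an }(\epsilon,\delta,L)\text{-private strategy}\}$. All logarithms are base 2, and non-integer quantities in the bounds are understood rounded up to the nearest integer (e.g., $\lceil\log(1/(L\epsilon))\rceil$). *)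

theory Defs
  imports Complex_Main
begin

text \<open>A learner strategy of length N is given by a seed range Yc (seed Y uniform on {1..Yc}),
query functions qf k rs y (the (k+1)-th query, k < N, given the first k responses rs and seed y)
and an estimation function est rs y.\<close>

type_synonym query_fun = "nat \<Rightarrow> bool list \<Rightarrow> nat \<Rightarrow> real"
type_synonym est_fun = "bool list \<Rightarrow> nat \<Rightarrow> real"

fun resps :: "query_fun \<Rightarrow> real \<Rightarrow> nat \<Rightarrow> nat \<Rightarrow> bool list" where
  "resps qf x y 0 = []"
| "resps qf x y (Suc k) = resps qf x y k @ [x \<ge> qf k (resps qf x y k) y]"

definition queries :: "query_fun \<Rightarrow> nat \<Rightarrow> real \<Rightarrow> nat \<Rightarrow> real list" where
  "queries qf N x y = map (\<lambda>k. qf k (resps qf x y k) y) [0..<N]"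

definition estimate :: "query_fun \<Rightarrow> est_fun \<Rightarrow> nat \<Rightarrow> real \<Rightarrow> nat \<Rightarrow> real" where
  "estimate qf est N x y = est (resps qf x y N) y"

definition is_strategy :: "nat \<Rightarrow> nat \<Rightarrow> query_fun \<Rightarrow> est_fun \<Rightarrow> bool" where
  "is_strategy N Yc qf est \<longleftrightarrow> Yc \<ge> 1
     \<and> (\<forall>k<N. \<forall>rs. \<forall>y\<in>{1..Yc}. qf k rs y \<in> {0..<1})
     \<and> (\<forall>rs. \<forall>y\<in>{1..Yc}. est rs y \<in> {0..<1})
     \<and> (\<forall>x\<in>{0..<1}. \<forall>y\<in>{1..Yc}. distinct (queries qf N x y))"

text \<open>Q(x): query sequences with positive probability (Y uniform on {1..Yc}).\<close>
definition Qset :: "query_fun \<Rightarrow> nat \<Rightarrow> nat \<Rightarrow> real \<Rightarrow> real list set" where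
  "Qset qf N Yc x = {qs. \<exists>y\<in>{1..Yc}. queries qf N x y = qs}"

definition info_set :: "query_fun \<Rightarrow> nat \<Rightarrow> nat \<Rightarrow> real list \<Rightarrow> real set" where
  "info_set qf N Yc qs = {x \<in> {0..<1}. qs \<in> Qset qf N Yc x}"

definition coverable :: "real \<Rightarrow> nat \<Rightarrow> real set \<Rightarrow> bool" where
  "coverable \<delta> L E \<longleftrightarrow> (\<exists>a b :: nat \<Rightarrow> real. (\<forall>i<L. a i \<le> b i \<and> b i - a i \<le> \<delta>)
      \<and> E \<subseteq> (\<Union>i<L. {a i..b i}))"

definition cover_number :: "real \<Rightarrow> real set \<Rightarrow> nat" where
  "cover_number \<delta> E = (LEAST L. coverable \<delta> L E)"

definition is_private :: "real \<Rightarrow> real \<Rightarrow> nat \<Rightarrow> nat \<Rightarrow> nat \<Rightarrow> query_fun \<Rightarrow> est_fun \<Rightarrow> bool" where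
  "is_private \<epsilon> \<delta> L N Yc qf est \<longleftrightarrow> is_strategy N Yc qf est
     \<and> (\<forall>x\<in>{0..<1}. \<forall>y\<in>{1..Yc}. \<bar>estimate qf est N x y - x\<bar> \<le> \<epsilon> / 2)
     \<and> (\<forall>x\<in>{0..<1}. \<forall>qs\<in>Qset qf N Yc x. cover_number \<delta> (info_set qf N Yc qs) \<ge> L)"

definition Nstar :: "real \<Rightarrow> real \<Rightarrow> nat \<Rightarrow> nat" where
  "Nstar \<epsilon> \<delta> L = (LEAST N. \<exists>Yc qf est. is_private \<epsilon> \<delta> L N Yc qf est)"

end

theory Submission
  imports Defs
begin

lemma resps_length[simp]: "length (resps qf x y k) = k"
  by (induction k) auto

lemma resps_nth: "k < K \<Longrightarrow> resps qf x y K ! k = (x \<ge> qf k (resps qf x y k) y)"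
proof (induction K)
  case 0 then show ?case by simp
next
  case (Suc K)
  then show ?case by (cases "k = K") (auto simp: nth_append)
qed

lemma resps_same:
  assumes "\<And>k. k < K \<Longrightarrow> (x \<ge> qf k (resps qf x y k) y) = (x' \<ge> qf k (resps qf x y k) y)"
  shows "resps qf x y K = resps qf x' y K"
  using assms
proof (induction K)
  case 0 then show ?case by simp
next
  case (Suc K)
  then have e: "resps qf x y K = resps qf x' y K" by simp
  have "(x \<ge> qf K (resps qf x y K) y) = (x' \<ge> qf K (resps qf x y K) y)" using Suc.prems by simp
  then show ?case using e by (simp del: resps.simps add: resps.simps(2)[of qf x y K] resps.simps(2)[of qf x' y K])
qed

lemma queries_nth: "k < N \<Longrightarrow> queries qf N x y ! k = qf k (resps qf x y k) y"
  by (simp add: queries_def)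

lemma queries_length[simp]: "length (queries qf N x y) = N"
  by (simp add: queries_def)

definition cnt :: "query_fun \<Rightarrow> nat \<Rightarrow> nat \<Rightarrow> real \<Rightarrow> nat \<Rightarrow> real \<Rightarrow> nat" where
  "cnt qf N y w k x = card {i. k \<le> i \<and> i < N \<and> qf i (resps qf x y i) y \<in> {0<..<w}}"

lemma cnt_step:
  assumes "k < N"
  shows "cnt qf N y w k x = cnt qf N y w (Suc k) x + (if qf k (resps qf x y k) y \<in> {0<..<w} then 1 else 0)"
proof (cases "qf k (resps qf x y k) y \<in> {0<..<w}")
  case True
  have eq: "{i. k \<le> i \<and> i < N \<and> qf i (resps qf x y i) y \<in> {0<..<w}} =
     insert k {i. Suc k \<le> i \<and> i < N \<and> qf i (resps qf x y i) y \<in> {0<..<w}}"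
    using assms True by (auto simp: le_eq_less_or_eq)
  have "finite {i. Suc k \<le> i \<and> i < N \<and> qf i (resps qf x y i) y \<in> {0<..<w}}" by simp
  then show ?thesis unfolding cnt_def eq using True by simp
next
  case False
  have eq: "{i. k \<le> i \<and> i < N \<and> qf i (resps qf x y i) y \<in> {0<..<w}} =
     {i. Suc k \<le> i \<and> i < N \<and> qf i (resps qf x y i) y \<in> {0<..<w}}"
    using assms False by (auto simp: le_eq_less_or_eq)
  then show ?thesis unfolding cnt_def using False by simp
qed

lemma kraft_aux:
  assumes "N - k = d" "k \<le> N" "finite P" "P \<subseteq> {0..<w}"
    "\<forall>x\<in>P. \<forall>x'\<in>P. resps qf x y k = resps qf x' y k"
    "\<forall>x\<in>P. \<forall>x'\<in>P. resps qf x y N = resps qf x' y N \<longrightarrow> x = x'"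
  shows "(\<Sum>x\<in>P. (1/2::real) ^ cnt qf N y w k x) \<le> 1"
  using assms
proof (induction d arbitrary: k P)
  case 0
  from 0(1,2) have kN: "k = N" by simp
  show ?case
  proof (cases "P = {}")
    case True then show ?thesis by simp
  next
    case False
    then obtain a where a: "a \<in> P" by auto
    have same: "resps qf x y N = resps qf x' y N" if "x \<in> P" "x' \<in> P" for x x'
      using 0(5)[rule_format, OF that] kN by simp
    have "x = a" if "x \<in> P" for x using 0(6)[rule_format, OF that a] same[OF that a] by simp
    then have "P = {a}" using a by blast
    then show ?thesis by (simp add: power_le_one)
  qed
next
  case (Suc d)
  from Suc.prems(1,2) have kN: "k < N" by simp
  show ?case
  proof (cases "P = {}")
    case True then show ?thesis by simp
  next
    case False
    then obtain x0 where x0: "x0 \<in> P" by auto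
    define q where "q = qf k (resps qf x0 y k) y"
    have qx: "qf k (resps qf x y k) y = q" if "x \<in> P" for x
    proof -
      have "resps qf x y k = resps qf x0 y k" using Suc.prems(5)[rule_format, OF that x0] .
      then show ?thesis unfolding q_def by simp
    qed
    define P1 where "P1 = {x\<in>P. q \<le> x}"
    define P0 where "P0 = {x\<in>P. \<not> q \<le> x}"
    have rs1: "resps qf x y (Suc k) = resps qf x y k @ [q \<le> x]" if "x \<in> P" for x
      using qx[OF that] by simp
    have same: "resps qf x y k = resps qf x' y k" if "x \<in> P" "x' \<in> P" for x x'
      using Suc.prems(5)[rule_format, OF that] .
    have IH1: "(\<Sum>x\<in>P1. (1/2::real) ^ cnt qf N y w (Suc k) x) \<le> 1"
    proof (rule Suc.IH)
      show "N - Suc k = d" using Suc.prems(1) by simp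
      show "Suc k \<le> N" using kN by simp
      show "finite P1" using Suc.prems(3) unfolding P1_def by simp
      show "P1 \<subseteq> {0..<w}" using Suc.prems(4) unfolding P1_def by blast
      show "\<forall>x\<in>P1. \<forall>x'\<in>P1. resps qf x y (Suc k) = resps qf x' y (Suc k)"
      proof (intro ballI)
        fix x x' assume a: "x \<in> P1" "x' \<in> P1"
        then have b: "x \<in> P" "x' \<in> P" "(q \<le> x) = (q \<le> x')" unfolding P1_def by auto
        show "resps qf x y (Suc k) = resps qf x' y (Suc k)"
          unfolding rs1[OF b(1)] rs1[OF b(2)] same[OF b(1) b(2)] b(3) ..
      qed
      show "\<forall>x\<in>P1. \<forall>x'\<in>P1. resps qf x y N = resps qf x' y N \<longrightarrow> x = x'"
      proof (intro ballI impI)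
        fix x x' assume "x \<in> P1" "x' \<in> P1" "resps qf x y N = resps qf x' y N"
        then show "x = x'" using Suc.prems(6)[rule_format, of x x'] unfolding P1_def by simp
      qed
    qed
    have IH0: "(\<Sum>x\<in>P0. (1/2::real) ^ cnt qf N y w (Suc k) x) \<le> 1"
    proof (rule Suc.IH)
      show "N - Suc k = d" using Suc.prems(1) by simp
      show "Suc k \<le> N" using kN by simp
      show "finite P0" using Suc.prems(3) unfolding P0_def by simp
      show "P0 \<subseteq> {0..<w}" using Suc.prems(4) unfolding P0_def by blast
      show "\<forall>x\<in>P0. \<forall>x'\<in>P0. resps qf x y (Suc k) = resps qf x' y (Suc k)"
      proof (intro ballI)
        fix x x' assume a: "x \<in> P0" "x' \<in> P0"
        then have b: "x \<in> P" "x' \<in> P" "(q \<le> x) = (q \<le> x')" unfolding P0_def by auto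
        show "resps qf x y (Suc k) = resps qf x' y (Suc k)"
          unfolding rs1[OF b(1)] rs1[OF b(2)] same[OF b(1) b(2)] b(3) ..
      qed
      show "\<forall>x\<in>P0. \<forall>x'\<in>P0. resps qf x y N = resps qf x' y N \<longrightarrow> x = x'"
      proof (intro ballI impI)
        fix x x' assume "x \<in> P0" "x' \<in> P0" "resps qf x y N = resps qf x' y N"
        then show "x = x'" using Suc.prems(6)[rule_format, of x x'] unfolding P0_def by simp
      qed
    qed
    have PU: "P = P0 \<union> P1" "P0 \<inter> P1 = {}" "finite P0" "finite P1"
      using Suc.prems(3) unfolding P0_def P1_def by auto
    have sumsplit: "(\<Sum>x\<in>P. f x) = (\<Sum>x\<in>P0. f x) + (\<Sum>x\<in>P1. f x)" for f :: "real \<Rightarrow> real"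
      using PU sum.union_disjoint by metis
    show ?thesis
    proof (cases "P0 \<noteq> {} \<and> P1 \<noteq> {}")
      case True
      then obtain a b where a: "a \<in> P0" and b: "b \<in> P1" by auto
      have "0 \<le> a" "a < q" "q \<le> b" "b < w"
        using a b Suc.prems(4) unfolding P0_def P1_def by auto
      then have qin: "q \<in> {0<..<w}" by simp
      have c: "cnt qf N y w k x = Suc (cnt qf N y w (Suc k) x)" if "x \<in> P" for x
        using cnt_step[OF kN, of qf y w x] qx[OF that] qin by simp
      have "(\<Sum>x\<in>P. (1/2::real) ^ cnt qf N y w k x) =
            (\<Sum>x\<in>P. (1/2) * (1/2::real) ^ cnt qf N y w (Suc k) x)"
        by (rule sum.cong) (auto simp: c)
      also have "\<dots> = (1/2) * (\<Sum>x\<in>P0. (1/2::real) ^ cnt qf N y w (Suc k) x)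
                     + (1/2) * (\<Sum>x\<in>P1. (1/2::real) ^ cnt qf N y w (Suc k) x)"
        by (subst sumsplit) (simp add: sum_distrib_left)
      also have "\<dots> \<le> 1" using IH0 IH1 by linarith
      finally show ?thesis .
    next
      case False
      then have "P = P0 \<or> P = P1" using PU by auto
      have le: "(1/2::real) ^ cnt qf N y w k x \<le> (1/2::real) ^ cnt qf N y w (Suc k) x" for x
        using cnt_step[OF kN, of qf y w x] by (intro power_decreasing) auto
      then have le2: "(\<Sum>x\<in>P. (1/2::real) ^ cnt qf N y w k x) \<le> (\<Sum>x\<in>P. (1/2::real) ^ cnt qf N y w (Suc k) x)"
        by (intro sum_mono) 
      show ?thesis using \<open>P = P0 \<or> P = P1\<close> IH0 IH1 le2 by auto
    qed
  qed
qed


lemma est_eq_close: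
  assumes "resps qf x y N = resps qf x' y N"
    "\<bar>estimate qf est N x y - x\<bar> \<le> \<epsilon> / 2" "\<bar>estimate qf est N x' y - x'\<bar> \<le> \<epsilon> / 2"
  shows "\<bar>x - x'\<bar> \<le> \<epsilon>"
proof -
  have "estimate qf est N x y = estimate qf est N x' y"
    unfolding estimate_def using assms(1) by simp
  then show ?thesis using assms(2,3) by linarith
qed

lemma kraft:
  assumes acc: "\<And>x. x \<in> {0..<w} \<Longrightarrow> \<bar>estimate qf est N x y - x\<bar> \<le> \<epsilon> / 2"
    and eps: "\<epsilon> > 0" and w: "w > 0"
  shows "\<exists>x\<in>{0..<w}. w / \<epsilon> \<le> 2 ^ cnt qf N y w 0 x"
proof -
  define K where "K = nat \<lceil>w / \<epsilon>\<rceil>"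
  show ?thesis
  proof (cases "K \<le> 1")
    case True
    then have "w / \<epsilon> \<le> 1" unfolding K_def by linarith
    moreover have "(1::real) \<le> 2 ^ cnt qf N y w 0 0" by simp
    ultimately have "w / \<epsilon> \<le> 2 ^ cnt qf N y w 0 0" by linarith
    then show ?thesis using w by (intro bexI[of _ 0]) auto
  next
    case False
    then have K2: "K \<ge> 2" by simp
    have wpos: "w / \<epsilon> > 0" using w eps by simp
    have RK: "real K = of_int \<lceil>w / \<epsilon>\<rceil>" unfolding K_def
      using wpos by (intro of_nat_nat) (simp add: order.strict_implies_order)
    have "real K - 1 < w / \<epsilon>" unfolding RK using ceiling_correct[of "w / \<epsilon>"] by linarith
    then have Kw: "(real K - 1) * \<epsilon> < w" using eps by (simp add: field_simps)
    have K1pos: "real K - 1 > 0" using K2 by simp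
    define W where "W = w / (real K - 1)"
    have eW: "\<epsilon> < W" unfolding W_def using Kw K1pos by (simp add: field_simps)
    define g where "g = (\<epsilon> + W) / 2"
    have gg1: "\<epsilon> < g" using eW unfolding g_def by simp
    have gg2: "g < W" using eW unfolding g_def by simp
    note gg = gg1 gg2
    have "g * (real K - 1) < W * (real K - 1)" using gg2 K1pos by (rule mult_strict_right_mono)
    also have "W * (real K - 1) = w" unfolding W_def using K1pos by simp
    finally have gK: "g * (real K - 1) < w" .
    have gpos: "g > 0" using gg eps by linarith
    define P where "P = (\<lambda>i. real i * g) ` {..<K}"
    have injP: "inj_on (\<lambda>i. real i * g) {..<K}"
      using gpos by (auto simp: inj_on_def)
    have cardP: "card P = K" unfolding P_def using injP by (simp add: card_image)
    have finP: "finite P" unfolding P_def by simp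
    have Pw: "P \<subseteq> {0..<w}"
    proof
      fix x assume "x \<in> P"
      then obtain i where i: "i < K" "x = real i * g" unfolding P_def by auto
      have "real i \<le> real K - 1" using i by linarith
      then have "real i * g \<le> (real K - 1) * g" using gpos by (intro mult_right_mono) auto
      moreover have "(real K - 1) * g < w" using gK by (simp add: mult.commute)
      ultimately have "real i * g < w" by linarith
      then show "x \<in> {0..<w}" using i gpos by simp
    qed
    have distinctP: "\<forall>x\<in>P. \<forall>x'\<in>P. resps qf x y N = resps qf x' y N \<longrightarrow> x = x'"
    proof (intro ballI impI)
      fix x x' assume xP: "x \<in> P" and x'P: "x' \<in> P" and r: "resps qf x y N = resps qf x' y N"
      obtain i where i: "i < K" "x = real i * g" using xP unfolding P_def by auto
      obtain i' where i': "i' < K" "x' = real i' * g" using x'P unfolding P_def by auto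
      have "\<bar>x - x'\<bar> \<le> \<epsilon>"
      proof -
        have "x \<in> {0..<w}" "x' \<in> {0..<w}" using xP x'P Pw by auto
        then show ?thesis using est_eq_close[OF r acc acc] by blast
      qed
      show "x = x'"
      proof (rule ccontr)
        assume "x \<noteq> x'"
        then have "i \<noteq> i'" using i i' by auto
        then have "1 \<le> \<bar>real i - real i'\<bar>" by linarith
        then have "g \<le> \<bar>real i - real i'\<bar> * g" using gpos by simp
        also have "\<dots> = \<bar>x - x'\<bar>" using i i' gpos by (simp add: abs_mult left_diff_distrib[symmetric])
        finally show False using \<open>\<bar>x - x'\<bar> \<le> \<epsilon>\<close> gg by linarith
      qed
    qed
    have S: "(\<Sum>x\<in>P. (1/2::real) ^ cnt qf N y w 0 x) \<le> 1"
      by (rule kraft_aux[of N 0 N]) (use finP Pw distinctP in auto)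
    have "\<exists>x\<in>P. (1/2::real) ^ cnt qf N y w 0 x \<le> 1 / real K"
    proof (rule ccontr)
      assume "\<not> ?thesis"
      then have lt: "\<And>x. x \<in> P \<Longrightarrow> 1 / real K < (1/2::real) ^ cnt qf N y w 0 x" by force
      have "P \<noteq> {}" using cardP K2 by auto
      then have "(\<Sum>x\<in>P. 1 / real K) < (\<Sum>x\<in>P. (1/2::real) ^ cnt qf N y w 0 x)"
        using finP lt by (intro sum_strict_mono) auto
      moreover have "(\<Sum>x\<in>P. 1 / real K) = 1" using cardP K2 by simp
      ultimately show False using S by linarith
    qed
    then obtain x where xP: "x \<in> P" and hx: "(1/2::real) ^ cnt qf N y w 0 x \<le> 1 / real K" by blast
    have "real K \<le> 2 ^ cnt qf N y w 0 x"
      using hx K2 by (simp add: power_one_over field_simps)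
    moreover have "w / \<epsilon> \<le> real K" unfolding RK by (rule le_of_int_ceiling)
    ultimately have "w / \<epsilon> \<le> 2 ^ cnt qf N y w 0 x" by linarith
    moreover have "x \<in> {0..<w}" using xP Pw by blast
    ultimately show ?thesis by blast
  qed
qed

lemma sep:
  assumes acc1: "\<bar>estimate qf est N z y - z\<bar> \<le> \<epsilon> / 2"
    and acc2: "\<bar>estimate qf est N z'' y - z''\<bar> \<le> \<epsilon> / 2"
    and far: "\<epsilon> < \<bar>z - z''\<bar>"
  shows "\<exists>q\<in>set (queries qf N z y). min z z'' < q \<and> q \<le> max z z''"
proof (rule ccontr)
  assume no: "\<not> ?thesis"
  have "resps qf z y N = resps qf z'' y N"
  proof (rule resps_same)
    fix k assume k: "k < N"
    have qin: "qf k (resps qf z y k) y \<in> set (queries qf N z y)"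
      using k unfolding queries_def by auto
    then have "\<not> (min z z'' < qf k (resps qf z y k) y \<and> qf k (resps qf z y k) y \<le> max z z'')"
      using no by blast
    then show "(z \<ge> qf k (resps qf z y k) y) = (z'' \<ge> qf k (resps qf z y k) y)"
      by (auto simp: min_def max_def split: if_splits)
  qed
  then have "\<bar>z - z''\<bar> \<le> \<epsilon>" using est_eq_close acc1 acc2 by blast
  with far show False by simp
qed

lemma cov_empty: "0 \<le> \<delta> \<Longrightarrow> coverable \<delta> m {}"
  unfolding coverable_def by (rule exI[of _ "\<lambda>_. 0"], rule exI[of _ "\<lambda>_. 0"]) auto

lemma cov_cons:
  assumes "coverable \<delta> m S" "lo \<le> hi" "hi - lo \<le> \<delta>" "T \<subseteq> {lo..hi} \<union> S"
  shows "coverable \<delta> (Suc m) T"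
proof -
  obtain a b where ab: "\<forall>i<m. a i \<le> b i \<and> b i - a i \<le> \<delta>" "S \<subseteq> (\<Union>i<m. {a i..b i})"
    using assms(1) unfolding coverable_def by blast
  define a' where "a' i = (if i = 0 then lo else a (i - 1))" for i
  define b' where "b' i = (if i = 0 then hi else b (i - 1))" for i
  have 1: "\<forall>i<Suc m. a' i \<le> b' i \<and> b' i - a' i \<le> \<delta>"
  proof (intro allI impI)
    fix i assume i: "i < Suc m"
    show "a' i \<le> b' i \<and> b' i - a' i \<le> \<delta>"
    proof (cases i)
      case 0 then show ?thesis using assms(2,3) by (simp add: a'_def b'_def)
    next
      case (Suc j) then show ?thesis using ab(1) i by (simp add: a'_def b'_def)
    qed
  qed
  have 2: "T \<subseteq> (\<Union>i<Suc m. {a' i..b' i})"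
  proof
    fix x assume "x \<in> T"
    then have "x \<in> {lo..hi} \<or> x \<in> S" using assms(4) by blast
    then show "x \<in> (\<Union>i<Suc m. {a' i..b' i})"
    proof
      assume "x \<in> {lo..hi}" then show ?thesis by (intro UN_I[of 0]) (auto simp: a'_def b'_def)
    next
      assume "x \<in> S" then obtain i where "i < m" "x \<in> {a i..b i}" using ab(2) by blast
      then show ?thesis by (intro UN_I[of "Suc i"]) (auto simp: a'_def b'_def)
    qed
  qed
  show ?thesis unfolding coverable_def using 1 2 by blast
qed

lemma greedy:
  fixes E :: "real set"
  assumes E: "E \<subseteq> {0..<1}" and d: "0 \<le> d" "d < \<delta>"
  shows "\<not> coverable \<delta> m (E \<inter> {c..}) \<Longrightarrow>
    \<exists>z. (\<forall>i\<le>m. z i \<in> E) \<and> c \<le> z 0 \<and> (\<forall>i<m. z i + d < z (Suc i))"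
proof (induction m arbitrary: c)
  case 0
  have dpos: "0 \<le> \<delta>" using d by simp
  have "E \<inter> {c..} \<noteq> {}" using 0 cov_empty[OF dpos] by metis
  then obtain z0 where "z0 \<in> E" "c \<le> z0" by auto
  then show ?case by (intro exI[of _ "\<lambda>_. z0"]) auto
next
  case (Suc m)
  have dpos: "0 \<le> \<delta>" using d by simp
  define E' where "E' = E \<inter> {c..}"
  have ne: "E' \<noteq> {}" using Suc.prems cov_empty[OF dpos] unfolding E'_def by metis
  have bdd: "bdd_below E'" unfolding E'_def using E by (intro bdd_belowI[of _ 0]) auto
  define c0 where "c0 = Inf E'"
  have "Inf E' < c0 + (\<delta> - d)" using d unfolding c0_def by simp
  then obtain z0 where z0: "z0 \<in> E'" "z0 < c0 + (\<delta> - d)" using cInf_less_iff[OF ne bdd] by blast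
  have lower: "c0 \<le> x" if "x \<in> E'" for x unfolding c0_def using cInf_lower[OF that bdd] .
  have nc: "\<not> coverable \<delta> m (E \<inter> {c0 + \<delta>..})"
  proof
    assume cv: "coverable \<delta> m (E \<inter> {c0 + \<delta>..})"
    have "E' \<subseteq> {c0..c0+\<delta>} \<union> (E \<inter> {c0 + \<delta>..})" using lower unfolding E'_def by force
    hence "coverable \<delta> (Suc m) E'" using cov_cons[OF cv, of c0 "c0+\<delta>"] dpos by simp
    then show False using Suc.prems unfolding E'_def by simp
  qed
  obtain z' where z': "\<forall>i\<le>m. z' i \<in> E" "c0 + \<delta> \<le> z' 0" "\<forall>i<m. z' i + d < z' (Suc i)"
    using Suc.IH[OF nc] by blast
  define z where "z i = (if i = 0 then z0 else z' (i - 1))" for i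
  have "\<forall>i\<le>Suc m. z i \<in> E"
  proof (intro allI impI)
    fix i assume i: "i \<le> Suc m"
    show "z i \<in> E"
    proof (cases i)
      case 0 then show ?thesis using z0(1) unfolding z_def E'_def by simp
    next
      case (Suc j) then show ?thesis using z'(1) i unfolding z_def by simp
    qed
  qed
  moreover have "c \<le> z 0" using z0 unfolding z_def E'_def by simp
  moreover have "\<forall>i<Suc m. z i + d < z (Suc i)"
  proof (intro allI impI)
    fix i assume i: "i < Suc m"
    show "z i + d < z (Suc i)"
    proof (cases i)
      case 0 then show ?thesis using z0(2) z'(2) unfolding z_def by simp
    next
      case (Suc j) then show ?thesis using z'(3) i unfolding z_def by simp
    qed
  qed
  ultimately show ?case by blast
qed

lemma z_mono:
  fixes z :: "nat \<Rightarrow> real"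
  assumes "\<forall>i<m. z i + d < z (Suc i)" "0 \<le> d"
  shows "i < j \<Longrightarrow> j \<le> m \<Longrightarrow> z i + d < z j"
proof (induction j)
  case 0 then show ?case by simp
next
  case (Suc j)
  show ?case
  proof (cases "i = j")
    case True then show ?thesis using assms(1) Suc.prems by simp
  next
    case False
    then have "z i + d < z j" using Suc by simp
    moreover have "z j + d < z (Suc j)" using assms(1) Suc.prems by simp
    ultimately show ?thesis using assms(2) by linarith
  qed
qed

lemma far_count:
  assumes priv: "is_private \<epsilon> \<delta> L N Yc qf est" and eps: "0 < \<epsilon>" "2 * \<epsilon> < \<delta>"
    and L: "2 \<le> L" and x: "x \<in> {0..<1}" and y: "y \<in> {1..Yc}"
  shows "2 * L - 4 \<le> card {k. k < N \<and> \<delta> < queries qf N x y ! k}"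
proof -
  define qs where "qs = queries qf N x y"
  define E where "E = info_set qf N Yc qs"
  have lenqs: "length qs = N" unfolding qs_def by simp
  have qsQ: "qs \<in> Qset qf N Yc x" unfolding qs_def Qset_def using y by blast
  have cn: "L \<le> cover_number \<delta> E" using priv x qsQ unfolding is_private_def E_def by blast
  have acc: "\<And>x y. x \<in> {0..<1} \<Longrightarrow> y \<in> {1..Yc} \<Longrightarrow> \<bar>estimate qf est N x y - x\<bar> \<le> \<epsilon> / 2"
    using priv unfolding is_private_def by blast
  have E01: "E \<subseteq> {0..<1}" unfolding E_def info_set_def by auto
  have ncL: "\<not> coverable \<delta> (L - 1) E"
  proof
    assume "coverable \<delta> (L-1) E"
    then have "cover_number \<delta> E \<le> L - 1" unfolding cover_number_def by (rule Least_le)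
    then show False using cn L by linarith
  qed
  have nc: "\<not> coverable \<delta> (L - 2) (E \<inter> {\<delta>..})"
  proof
    assume cv: "coverable \<delta> (L-2) (E \<inter> {\<delta>..})"
    have "E \<subseteq> {0..\<delta>} \<union> (E \<inter> {\<delta>..})" using E01 by auto
    then have "coverable \<delta> (Suc (L-2)) E" using cov_cons[OF cv, of 0 \<delta>] eps by simp
    moreover have "Suc (L-2) = L - 1" using L by simp
    ultimately show False using ncL by simp
  qed
  define e' where "e' = (\<epsilon> + \<delta>/2)/2"
  have e'1: "\<epsilon> < e'" using eps unfolding e'_def by simp
  have e'2: "2*e' < \<delta>" using eps unfolding e'_def by simp
  have e'0: "0 \<le> 2 * e'" using e'1 eps by simp
  obtain z where z: "\<forall>i\<le>L-2. z i \<in> E" "\<delta> \<le> z 0" "\<forall>i<L-2. z i + 2*e' < z (Suc i)"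
    using greedy[OF E01 e'0 e'2 nc] by blast
  have zmono: "z i + 2*e' < z j" if "i < j" "j \<le> L-2" for i j
    using z_mono[OF z(3) e'0] that by blast
  have zmono': "z i \<le> z j" if "i \<le> j" "j \<le> L-2" for i j
    using zmono[of i j] that e'0 by (cases "i = j") auto
  have zd: "\<delta> \<le> z i" if "i \<le> L - 2" for i using zmono'[of 0 i] that z(2) by simp
  have zin: "z i \<in> {0..<1}" if "i \<le> L - 2" for i using z(1) that E01 by blast
  have seed: "\<exists>yi\<in>{1..Yc}. queries qf N (z i) yi = qs" if "i \<le> L - 2" for i
    using z(1) that unfolding E_def info_set_def Qset_def by blast
  have up: "\<exists>q. q \<in> set qs \<and> z i < q \<and> q \<le> z i + e'" if i: "i < L-2" for i
  proof -
    obtain yi where yi: "yi \<in> {1..Yc}" "queries qf N (z i) yi = qs" using seed[of i] i by auto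
    have "z i + 2*e' < z (Suc i)" using z(3) i by simp
    moreover have "z (Suc i) < 1" using zin[of "Suc i"] i by simp
    ultimately have "z i + e' \<in> {0..<1}" using zin[of i] i e'1 eps by auto
    then have a2: "\<bar>estimate qf est N (z i + e') yi - (z i + e')\<bar> \<le> \<epsilon> / 2" using acc yi(1) by blast
    have a1: "\<bar>estimate qf est N (z i) yi - z i\<bar> \<le> \<epsilon> / 2" using acc zin[of i] i yi(1) by simp
    have "\<epsilon> < \<bar>z i - (z i + e')\<bar>" using e'1 eps by simp
    then obtain q where "q \<in> set (queries qf N (z i) yi)" "min (z i) (z i + e') < q" "q \<le> max (z i) (z i + e')"
      using sep[OF a1 a2] by blast
    then show ?thesis using yi(2) e'1 eps by (intro exI[of _ q]) auto
  qed
  have down: "\<exists>q. q \<in> set qs \<and> z i - e' < q \<and> q \<le> z i" if i: "1 \<le> i" "i \<le> L-2" for i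
  proof -
    obtain yi where yi: "yi \<in> {1..Yc}" "queries qf N (z i) yi = qs" using seed[of i] i by auto
    have "z 0 + 2*e' < z i" using zmono[of 0 i] i by simp
    then have "z i - e' \<in> {0..<1}" using zin[of i] i e'1 eps z(2) by auto
    then have a2: "\<bar>estimate qf est N (z i - e') yi - (z i - e')\<bar> \<le> \<epsilon> / 2" using acc yi(1) by blast
    have a1: "\<bar>estimate qf est N (z i) yi - z i\<bar> \<le> \<epsilon> / 2" using acc zin[of i] i yi(1) by simp
    have "\<epsilon> < \<bar>z i - (z i - e')\<bar>" using e'1 eps by simp
    then obtain q where "q \<in> set (queries qf N (z i) yi)" "min (z i) (z i - e') < q" "q \<le> max (z i) (z i - e')"
      using sep[OF a1 a2] by blast
    then show ?thesis using yi(2) e'1 eps by (intro exI[of _ q]) auto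
  qed
  obtain U where U: "\<And>i. i < L-2 \<Longrightarrow> U i \<in> set qs \<and> z i < U i \<and> U i \<le> z i + e'"
    using up by metis
  obtain D where D: "\<And>i. 1 \<le> i \<Longrightarrow> i \<le> L-2 \<Longrightarrow> D i \<in> set qs \<and> z i - e' < D i \<and> D i \<le> z i"
    using down by metis
  have Umono: "U i < U j" if "i < j" "j < L-2" for i j
  proof -
    have "U i \<le> z i + e'" using U[of i] that by simp
    moreover have "z i + 2*e' < z j" using zmono[of i j] that by simp
    moreover have "z j < U j" using U[of j] that by simp
    ultimately show ?thesis using e'1 eps by linarith
  qed
  have Dmono: "D i < D j" if "1 \<le> i" "i < j" "j \<le> L-2" for i j
  proof -
    have "D i \<le> z i" using D[of i] that by simp
    moreover have "z i + 2*e' < z j" using zmono[of i j] that by simp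
    moreover have "z j - e' < D j" using D[of j] that by simp
    ultimately show ?thesis using e'1 eps by linarith
  qed
  have injU: "inj_on U {..<L-2}"
  proof (rule inj_onI)
    fix i j assume "i \<in> {..<L-2}" "j \<in> {..<L-2}" "U i = U j"
    then show "i = j" using Umono[of i j] Umono[of j i] by (metis lessThan_iff less_irrefl linorder_neqE_nat)
  qed
  have injD: "inj_on D {1..L-2}"
  proof (rule inj_onI)
    fix i j assume "i \<in> {1..L-2}" "j \<in> {1..L-2}" "D i = D j"
    then show "i = j" using Dmono[of i j] Dmono[of j i] by (metis atLeastAtMost_iff less_irrefl linorder_neqE_nat)
  qed
  have disj: "U ` {..<L-2} \<inter> D ` {1..L-2} = {}"
  proof (rule ccontr)
    assume "U ` {..<L-2} \<inter> D ` {1..L-2} \<noteq> {}"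
    then obtain i j where ij: "i < L-2" "1 \<le> j" "j \<le> L-2" "U i = D j" by auto
    show False
    proof (cases "i < j")
      case True
      have "U i \<le> z i + e'" using U[of i] ij by simp
      moreover have "z i + 2*e' < z j" using zmono[of i j] ij True by simp
      moreover have "z j - e' < D j" using D[of j] ij by simp
      ultimately show False using ij(4) e'1 eps by linarith
    next
      case False
      have "D j \<le> z j" using D[of j] ij by simp
      moreover have "z j \<le> z i" using zmono'[of j i] ij False by simp
      moreover have "z i < U i" using U[of i] ij by simp
      ultimately show False using ij(4) by linarith
    qed
  qed
  define S where "S = U ` {..<L-2} \<union> D ` {1..L-2}"
  have cardS: "card S = 2 * L - 4"
  proof -
    have "card S = card (U ` {..<L-2}) + card (D ` {1..L-2})"
      unfolding S_def using disj by (intro card_Un_disjoint) auto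
    also have "\<dots> = (L - 2) + (L - 2)" using injU injD by (simp add: card_image)
    finally show ?thesis using L by simp
  qed
  have Ssub: "S \<subseteq> (\<lambda>k. qs ! k) ` {k. k < N \<and> \<delta> < qs ! k}"
  proof
    fix q assume "q \<in> S"
    then have "q \<in> set qs \<and> \<delta> < q"
    proof (unfold S_def, elim UnE imageE)
      fix i assume "q = U i" "i \<in> {..<L-2}"
      then show ?thesis using U[of i] zd[of i] by force
    next
      fix i assume qi: "q = D i" "i \<in> {1..L-2}"
      have "z 0 + 2*e' < z i" using zmono[of 0 i] qi by simp
      then show ?thesis using D[of i] qi z(2) e'1 eps by force
    qed
    then obtain k where "k < N" "qs ! k = q" "\<delta> < q" using lenqs by (metis in_set_conv_nth)
    then show "q \<in> (\<lambda>k. qs ! k) ` {k. k < N \<and> \<delta> < qs ! k}" by force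
  qed
  have "card S \<le> card ((\<lambda>k. qs ! k) ` {k. k < N \<and> \<delta> < qs ! k})"
    by (rule card_mono[OF _ Ssub]) simp
  also have "\<dots> \<le> card {k. k < N \<and> \<delta> < qs ! k}" by (rule card_image_le) simp
  finally show ?thesis using cardS unfolding qs_def by simp
qed

lemma ceil_log_le:
  assumes "0 < a" "a \<le> 2 ^ c"
  shows "\<lceil>log 2 a\<rceil> \<le> int c"
proof -
  have "log 2 a \<le> log 2 (2 ^ c)" using assms by (subst log_le_cancel_iff) auto
  also have "\<dots> = real c" by (simp add: log_pow_cancel)
  finally show ?thesis by (simp add: ceiling_le_iff)
qed

lemma lower_bounds:
  assumes priv: "is_private \<epsilon> \<delta> L N Yc qf est" and eps: "0 < \<epsilon>" "2 * \<epsilon> < \<delta>"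
    and L: "2 \<le> L" and d1: "\<delta> \<le> 1"
  shows "\<lceil>log 2 (1 / \<epsilon>)\<rceil> \<le> int N" "\<lceil>log 2 (\<delta> / \<epsilon>)\<rceil> + 2 * int L - 4 \<le> int N"
proof -
  have Yc: "(1::nat) \<in> {1..Yc}" using priv unfolding is_private_def is_strategy_def by simp
  have acc: "\<And>x. x \<in> {0..<1} \<Longrightarrow> \<bar>estimate qf est N x 1 - x\<bar> \<le> \<epsilon> / 2"
    using priv Yc unfolding is_private_def by blast
  have cntle: "cnt qf N 1 w 0 x \<le> N" for w x
    unfolding cnt_def by (rule order_trans[OF card_mono[of "{..<N}"]]) auto
  obtain x1 where x1: "x1 \<in> {0..<1}" "1 / \<epsilon> \<le> 2 ^ cnt qf N 1 1 0 x1"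
    using kraft[of 1 qf est N 1 \<epsilon>] acc eps by auto
  have "(2::real) ^ cnt qf N 1 1 0 x1 \<le> 2 ^ N" using cntle by (intro power_increasing) auto
  then have "1 / \<epsilon> \<le> 2 ^ N" using x1(2) by linarith
  then show "\<lceil>log 2 (1 / \<epsilon>)\<rceil> \<le> int N" using eps by (intro ceil_log_le) auto
  have dpos: "0 < \<delta>" using eps by simp
  obtain x where x: "x \<in> {0..<\<delta>}" "\<delta> / \<epsilon> \<le> 2 ^ cnt qf N 1 \<delta> 0 x"
    using kraft[of \<delta> qf est N 1 \<epsilon>] acc eps dpos d1 by auto
  have x01: "x \<in> {0..<1}" using x d1 by auto
  define A where "A = {i. i < N \<and> queries qf N x 1 ! i \<in> {0<..<\<delta>}}"
  define F where "F = {k. k < N \<and> \<delta> < queries qf N x 1 ! k}"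
  have cA: "cnt qf N 1 \<delta> 0 x = card A"
  proof -
    have "{i. 0 \<le> i \<and> i < N \<and> qf i (resps qf x 1 i) 1 \<in> {0<..<\<delta>}} = A"
      unfolding A_def by (auto simp: queries_nth)
    then show ?thesis unfolding cnt_def by simp
  qed
  have cF: "2 * L - 4 \<le> card F" unfolding F_def by (rule far_count[OF priv eps L x01 Yc])
  have "card A + card F = card (A \<union> F)"
    by (rule card_Un_disjoint[symmetric]) (auto simp: A_def F_def)
  also have "\<dots> \<le> card {..<N}" by (rule card_mono) (auto simp: A_def F_def)
  finally have sum: "card A + card F \<le> N" by simp
  have "\<lceil>log 2 (\<delta> / \<epsilon>)\<rceil> \<le> int (card A)"
    using x cA eps dpos by (intro ceil_log_le) auto
  then show "\<lceil>log 2 (\<delta> / \<epsilon>)\<rceil> + 2 * int L - 4 \<le> int N" using sum cF L by linarith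
qed

definition hh :: "nat \<Rightarrow> nat \<Rightarrow> real" where "hh L n = 1 / (real L * 2 ^ n)"
definition blk :: "nat \<Rightarrow> bool list \<Rightarrow> nat" where "blk L rs = card {k \<in> {1..<L}. rs ! k}"
definition hitp :: "nat \<Rightarrow> bool list \<Rightarrow> bool" where "hitp L rs = (\<not> rs ! (L + blk L rs))"
definition gq :: "nat \<Rightarrow> real" where "gq m = (if m = 1 then 1/2 else real m)"
definition mid :: "nat \<Rightarrow> nat \<Rightarrow> nat \<Rightarrow> nat" where "mid n v t = v * 2 ^ (n - t) + 2 ^ (n - Suc t)"
definition Qp :: "nat \<Rightarrow> nat \<Rightarrow> nat \<Rightarrow> nat \<Rightarrow> nat \<Rightarrow> real" where
  "Qp L n a v t = (real (a * 2 ^ n) + gq (mid n v t)) * hh L n"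
definition vl :: "bool list \<Rightarrow> nat" where "vl bs = foldl (\<lambda>a b. 2 * a + (if b then 1 else 0)) 0 bs"
definition bitsr :: "nat \<Rightarrow> bool list \<Rightarrow> nat \<Rightarrow> bool list" where
  "bitsr L rs t = map (\<lambda>i. rs ! (2 * L + i)) [0..<t]"
definition pq :: "nat \<Rightarrow> nat \<Rightarrow> nat \<Rightarrow> real" where
  "pq L n k = (if k < L then real (k * 2 ^ n) * hh L n else real ((k - L) * 2 ^ n + 1) * hh L n)"
definition jF :: "nat \<Rightarrow> nat \<Rightarrow> nat" where "jF n y = (y - 1) div 2 ^ n"
definition uF :: "nat \<Rightarrow> nat \<Rightarrow> nat" where "uF n y = (y - 1) mod 2 ^ n"
definition qfC :: "nat \<Rightarrow> nat \<Rightarrow> query_fun" where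
  "qfC L n k rs y = (if k < 2 * L then pq L n k
     else if hitp L rs then Qp L n (jF n y) (uF n y div 2 ^ (n - (k - 2 * L))) (k - 2 * L)
     else Qp L n (blk L rs) (vl (bitsr L rs (k - 2 * L))) (k - 2 * L))"
definition estC :: "nat \<Rightarrow> nat \<Rightarrow> est_fun" where
  "estC L n rs y = (if hitp L rs then (real (blk L rs * 2 ^ n) + 1/2) * hh L n
     else (real (blk L rs * 2 ^ n + vl (bitsr L rs n)) + 1/2) * hh L n)"
definition pathq :: "nat \<Rightarrow> nat \<Rightarrow> nat \<Rightarrow> nat \<Rightarrow> real list" where
  "pathq L n a b = map (\<lambda>k. if k < 2 * L then pq L n k
      else Qp L n a (b div 2 ^ (n - (k - 2 * L))) (k - 2 * L)) [0..<2 * L + n]"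
definition bitb :: "nat \<Rightarrow> nat \<Rightarrow> nat \<Rightarrow> bool" where
  "bitb n u t = (2 ^ (n - Suc t) \<le> u mod 2 ^ (n - t))"

lemma vl_snoc: "vl (xs @ [b]) = 2 * vl xs + (if b then 1 else 0)"
  unfolding vl_def by simp

lemma vl_less: "vl bs < 2 ^ length bs"
proof (induction bs rule: rev_induct)
  case Nil then show ?case by (simp add: vl_def)
next
  case (snoc b bs) then show ?case by (simp add: vl_snoc)
qed

lemma div_step:
  assumes "t < n"
  shows "u div 2 ^ (n - Suc t) = 2 * (u div 2 ^ (n - t)) + (if bitb n u t then 1 else 0)"
proof -
  define P :: nat where "P = 2 ^ (n - Suc t)"
  have P2: "2 ^ (n - t) = P * 2" unfolding P_def using assms
    by (metis Suc_diff_Suc power_Suc2)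
  have Ppos: "P > 0" unfolding P_def by simp
  define a where "a = u div P"
  have d: "u div (P * 2) = a div 2" unfolding a_def by (simp add: div_mult2_eq)
  have m: "u mod (P * 2) = P * (a mod 2) + u mod P" unfolding a_def by (simp add: mod_mult2_eq)
  have "u mod P < P" using Ppos by simp
  then have b: "bitb n u t = (a mod 2 = 1)" unfolding bitb_def P2 m P_def[symmetric]
    by (cases "a mod 2 = 0") auto
  have "a = 2 * (a div 2) + (if a mod 2 = 1 then 1 else 0)" by presburger
  then show ?thesis unfolding P2 d b a_def[symmetric] P_def[symmetric] by simp
qed

lemma vl_bits: "t \<le> n \<Longrightarrow> u < 2 ^ n \<Longrightarrow> vl (map (bitb n u) [0..<t]) = u div 2 ^ (n - t)"
proof (induction t)
  case 0 then show ?case by (simp add: vl_def)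
next
  case (Suc t)
  then show ?case using div_step[of t n u] by (simp add: vl_snoc)
qed

lemma mid_le: "t < n \<Longrightarrow> (mid n (u div 2 ^ (n - t)) t \<le> u) = bitb n u t"
proof -
  assume t: "t < n"
  define P :: nat where "P = 2 ^ (n - Suc t)"
  have P2: "2 ^ (n - t) = P * 2" unfolding P_def using t
    by (metis Suc_diff_Suc power_Suc2)
  have e: "u = u div (P * 2) * (P * 2) + u mod (P * 2)" by (metis div_mult_mod_eq)
  show ?thesis unfolding mid_def bitb_def P2 P_def[symmetric]
    using e by linarith
qed

lemma mid_less: "t < n \<Longrightarrow> v < 2 ^ t \<Longrightarrow> mid n v t < 2 ^ n"
proof -
  assume t: "t < n" and v: "v < 2 ^ t"
  define P :: nat where "P = 2 ^ (n - Suc t)"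
  have P2: "2 ^ (n - t) = P * 2" unfolding P_def using t
    by (metis Suc_diff_Suc power_Suc2)
  have "2 ^ n = (2::nat) ^ t * 2 ^ (n - t)" using t by (simp flip: power_add)
  then have n2: "2 ^ n = 2 ^ t * (P * 2)" using P2 by simp
  have "v + 1 \<le> 2 ^ t" using v by simp
  then have "(v + 1) * (P * 2) \<le> 2 ^ t * (P * 2)" by (rule mult_right_mono) simp
  moreover have "P > 0" unfolding P_def by simp
  ultimately show ?thesis unfolding mid_def P2 P_def[symmetric] n2 by (simp add: algebra_simps)
qed

lemma mid_pos: "1 \<le> mid n v t"
  unfolding mid_def by (simp add: Suc_leI)

lemma mid_odd: "t < n \<Longrightarrow> mid n v t = (2 * v + 1) * 2 ^ (n - Suc t)"
proof -
  assume t: "t < n"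
  have P2: "2 ^ (n - t) = 2 ^ (n - Suc t) * (2::nat)" using t
    by (metis Suc_diff_Suc power_Suc2)
  show ?thesis unfolding mid_def P2 by (simp add: algebra_simps)
qed

lemma odd_pow_inj:
  fixes a b p q :: nat
  assumes "(2 * a + 1) * 2 ^ p = (2 * b + 1) * 2 ^ q"
  shows "p = q"
proof (rule ccontr)
  assume "p \<noteq> q"
  then consider "p < q" | "q < p" by linarith
  then show False
  proof cases
    case 1
    have "(2 * a + 1) * 2 ^ p = ((2 * b + 1) * 2 ^ (q - p)) * 2 ^ p"
      using assms 1 by (simp add: power_add[symmetric] algebra_simps)
    then have E: "2 * a + 1 = (2 * b + 1) * 2 ^ (q - p)" by (subst (asm) mult_cancel_right) simp
    have "even ((2 * b + 1) * 2 ^ (q - p))" using 1 by simp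
    then have "even (2 * a + 1)" unfolding E .
    then show False by simp
  next
    case 2
    have "(2 * b + 1) * 2 ^ q = ((2 * a + 1) * 2 ^ (p - q)) * 2 ^ q"
      using assms 2 by (simp add: power_add[symmetric] algebra_simps)
    then have E: "2 * b + 1 = (2 * a + 1) * 2 ^ (p - q)" by (subst (asm) mult_cancel_right) simp
    have "even ((2 * a + 1) * 2 ^ (p - q))" using 2 by simp
    then have "even (2 * b + 1)" unfolding E .
    then show False by simp
  qed
qed

definition ci :: "nat \<Rightarrow> nat \<Rightarrow> real \<Rightarrow> nat" where
  "ci L n x = nat \<lfloor>x * (real L * 2 ^ n)\<rfloor>"

lemma qfC_big: "\<not> k < 2 * L \<Longrightarrow> qfC L n k rs y = (if hitp L rs then Qp L n (jF n y) (uF n y div 2 ^ (n - (k - 2 * L))) (k - 2 * L)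
     else Qp L n (blk L rs) (vl (bitsr L rs (k - 2 * L))) (k - 2 * L))"
  by (simp add: qfC_def)

context
  fixes L n :: nat and x :: real and y :: nat
  assumes L: "L \<ge> 1" and n: "n \<ge> 1" and x0: "0 \<le> x" and x1: "x < 1"
begin

lemma H_pos: "real L * 2 ^ n > 0" using L by simp

lemma hh_pos: "hh L n > 0" unfolding hh_def using H_pos by simp

lemma cell: "real (ci L n x) * hh L n \<le> x" "x < real (ci L n x + 1) * hh L n"
proof -
  define H where "H = real L * 2 ^ n"
  have Hp: "H > 0" unfolding H_def using H_pos .
  have r0: "0 \<le> x * H" using x0 Hp by simp
  have ri: "real (ci L n x) = of_int \<lfloor>x * H\<rfloor>" unfolding ci_def H_def[symmetric] using r0 by simp
  have a: "real (ci L n x) \<le> x * H" unfolding ri by (rule of_int_floor_le)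
  have b: "x * H < real (ci L n x) + 1" unfolding ri by (rule real_of_int_floor_add_one_gt)
  show "real (ci L n x) * hh L n \<le> x" unfolding hh_def H_def[symmetric] using a Hp by (simp add: field_simps)
  show "x < real (ci L n x + 1) * hh L n" unfolding hh_def H_def[symmetric] using b Hp by (simp add: field_simps)
qed

lemma ci_less: "ci L n x < L * 2 ^ n"
proof -
  have "real (ci L n x) * hh L n \<le> x" by (rule cell(1))
  then have "real (ci L n x) * hh L n < 1" using x1 by linarith
  then have "real (ci L n x) < real L * 2 ^ n" unfolding hh_def using H_pos by (simp add: field_simps)
  then show ?thesis by (metis of_nat_less_iff of_nat_mult of_nat_numeral of_nat_power)
qed

lemma key: "(real m * hh L n \<le> x) = (m \<le> ci L n x)"
proof
  assume "m \<le> ci L n x"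
  then have "real m * hh L n \<le> real (ci L n x) * hh L n" using hh_pos by (simp add: mult_right_mono)
  then show "real m * hh L n \<le> x" using cell(1) by linarith
next
  assume a: "real m * hh L n \<le> x"
  show "m \<le> ci L n x"
  proof (rule ccontr)
    assume "\<not> m \<le> ci L n x"
    then have "ci L n x + 1 \<le> m" by simp
    then have "real (ci L n x + 1) * hh L n \<le> real m * hh L n" using hh_pos
      by (intro mult_right_mono) simp_all
    then show False using a cell(2) by linarith
  qed
qed

lemma resp_pair: "k < K \<Longrightarrow> k < 2 * L \<Longrightarrow> resps (qfC L n) x y K ! k = (pq L n k \<le> x)"
  by (simp add: resps_nth qfC_def)

lemma pq_le1: "k < L \<Longrightarrow> (pq L n k \<le> x) = (k * 2 ^ n \<le> ci L n x)"
  unfolding pq_def using key[of "k * 2 ^ n"] by simp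

lemma pq_le2: "L \<le> k \<Longrightarrow> (pq L n k \<le> x) = ((k - L) * 2 ^ n + 1 \<le> ci L n x)"
  unfolding pq_def using key[of "(k - L) * 2 ^ n + 1"] by simp

lemma blk_eq:
  assumes K: "2 * L \<le> K"
  shows "blk L (resps (qfC L n) x y K) = ci L n x div 2 ^ n"
proof -
  define j where "j = ci L n x div 2 ^ n"
  have jL: "j < L" unfolding j_def using ci_less by (simp add: div_less_iff_less_mult)
  have "{k \<in> {1..<L}. resps (qfC L n) x y K ! k} = {1..j}"
  proof (intro set_eqI iffI)
    fix k assume "k \<in> {k \<in> {1..<L}. resps (qfC L n) x y K ! k}"
    then have k: "1 \<le> k" "k < L" "resps (qfC L n) x y K ! k" by auto
    then have "k * 2 ^ n \<le> ci L n x" using resp_pair[of k K] pq_le1[of k] K by simp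
    then have "k \<le> j" unfolding j_def by (simp add: less_eq_div_iff_mult_less_eq)
    then show "k \<in> {1..j}" using k by simp
  next
    fix k assume k: "k \<in> {1..j}"
    then have "k * 2 ^ n \<le> ci L n x" unfolding j_def by (simp add: less_eq_div_iff_mult_less_eq)
    moreover have "k < L" using k jL by simp
    ultimately show "k \<in> {k \<in> {1..<L}. resps (qfC L n) x y K ! k}"
      using resp_pair[of k K] pq_le1[of k] K k by simp
  qed
  then show ?thesis unfolding blk_def j_def by simp
qed

lemma hit_eq:
  assumes K: "2 * L \<le> K"
  shows "hitp L (resps (qfC L n) x y K) = (ci L n x mod 2 ^ n = 0)"
proof -
  define j where "j = ci L n x div 2 ^ n"
  have jL: "j < L" unfolding j_def using ci_less by (simp add: div_less_iff_less_mult)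
  have dm: "ci L n x = j * 2 ^ n + ci L n x mod 2 ^ n" unfolding j_def by (metis div_mult_mod_eq)
  have "resps (qfC L n) x y K ! (L + j) = (j * 2 ^ n + 1 \<le> ci L n x)"
    using resp_pair[of "L + j" K] pq_le2[of "L + j"] K jL by simp
  also have "\<dots> = (ci L n x mod 2 ^ n \<noteq> 0)" using dm by linarith
  finally show ?thesis unfolding hitp_def blk_eq[OF K] j_def[symmetric] by simp
qed

lemma Qp_resp:
  assumes u: "ci L n x mod 2 ^ n \<noteq> 0" and t: "t < n"
  shows "(Qp L n (ci L n x div 2 ^ n) ((ci L n x mod 2 ^ n) div 2 ^ (n - t)) t \<le> x)
       = bitb n (ci L n x mod 2 ^ n) t"
proof -
  define j where "j = ci L n x div 2 ^ n"
  define u where "u = ci L n x mod 2 ^ n"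
  define m where "m = mid n (u div 2 ^ (n - t)) t"
  have dm: "ci L n x = j * 2 ^ n + u" unfolding j_def u_def by (metis div_mult_mod_eq)
  have ml: "(m \<le> u) = bitb n u t" unfolding m_def using mid_le[OF t] .
  show ?thesis
  proof (cases "m = 1")
    case True
    have "u \<ge> 1" using u unfolding u_def by simp
    then have b: "bitb n u t" using ml True by simp
    have "Qp L n j (u div 2 ^ (n - t)) t = (real (j * 2 ^ n) + 1/2) * hh L n"
      unfolding Qp_def m_def[symmetric] True gq_def by simp
    also have "\<dots> \<le> real (j * 2 ^ n + 1) * hh L n" using hh_pos by (intro mult_right_mono) auto
    also have "\<dots> \<le> x" using key[of "j * 2 ^ n + 1"] dm \<open>u \<ge> 1\<close> by simp
    finally show ?thesis using b unfolding j_def u_def by simp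
  next
    case False
    have "Qp L n j (u div 2 ^ (n - t)) t = real (j * 2 ^ n + m) * hh L n"
      unfolding Qp_def m_def[symmetric] gq_def using False by simp
    then have "(Qp L n j (u div 2 ^ (n - t)) t \<le> x) = (j * 2 ^ n + m \<le> ci L n x)"
      using key[of "j * 2 ^ n + m"] by simp
    also have "\<dots> = (m \<le> u)" using dm by simp
    finally show ?thesis using ml unfolding j_def u_def by simp
  qed
qed

lemma bits_resp:
  assumes u: "ci L n x mod 2 ^ n \<noteq> 0"
  shows "t < n \<Longrightarrow> 2 * L + t < K \<Longrightarrow> resps (qfC L n) x y K ! (2 * L + t) = bitb n (ci L n x mod 2 ^ n) t"
proof (induction t arbitrary: K rule: less_induct)
  case (less t)
  have rs: "resps (qfC L n) x y K ! (2 * L + t) =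
      (qfC L n (2 * L + t) (resps (qfC L n) x y (2 * L + t)) y \<le> x)"
    using less.prems(2) by (rule resps_nth)
  have hit: "\<not> hitp L (resps (qfC L n) x y (2 * L + t))" using hit_eq[of "2 * L + t"] u by simp
  have bl: "blk L (resps (qfC L n) x y (2 * L + t)) = ci L n x div 2 ^ n" using blk_eq[of "2 * L + t"] by simp
  have bs: "bitsr L (resps (qfC L n) x y (2 * L + t)) t = map (bitb n (ci L n x mod 2 ^ n)) [0..<t]"
    unfolding bitsr_def using less.IH less.prems by simp
  have vv: "vl (map (bitb n (ci L n x mod 2 ^ n)) [0..<t]) = (ci L n x mod 2 ^ n) div 2 ^ (n - t)"
    using less.prems by (intro vl_bits) auto
  have "qfC L n (2 * L + t) (resps (qfC L n) x y (2 * L + t)) y =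
        Qp L n (ci L n x div 2 ^ n) ((ci L n x mod 2 ^ n) div 2 ^ (n - t)) t"
    using hit bl bs vv by (simp add: qfC_big)
  then show ?case using rs Qp_resp[OF u less.prems(1)] by simp
qed

lemma query_eq:
  assumes k: "k < 2 * L + n"
  shows "qfC L n k (resps (qfC L n) x y k) y =
     (if k < 2 * L then pq L n k else
      Qp L n (if ci L n x mod 2 ^ n = 0 then jF n y else ci L n x div 2 ^ n)
        ((if ci L n x mod 2 ^ n = 0 then uF n y else ci L n x mod 2 ^ n) div 2 ^ (n - (k - 2 * L))) (k - 2 * L))"
proof (cases "k < 2 * L")
  case True then show ?thesis by (simp add: qfC_def)
next
  case False
  define t where "t = k - 2 * L"
  have kt: "k = 2 * L + t" "t < n" using False k unfolding t_def by auto
  show ?thesis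
  proof (cases "ci L n x mod 2 ^ n = 0")
    case True
    have "hitp L (resps (qfC L n) x y k)" using hit_eq[of k] True False by simp
    then show ?thesis using False True by (simp add: qfC_big)
  next
    case u: False
    have hit: "\<not> hitp L (resps (qfC L n) x y k)" using hit_eq[of k] u False by simp
    have bl: "blk L (resps (qfC L n) x y k) = ci L n x div 2 ^ n" using blk_eq[of k] False by simp
    have bs: "bitsr L (resps (qfC L n) x y k) t = map (bitb n (ci L n x mod 2 ^ n)) [0..<t]"
      unfolding bitsr_def using bits_resp[OF u] kt by simp
    have vv: "vl (map (bitb n (ci L n x mod 2 ^ n)) [0..<t]) = (ci L n x mod 2 ^ n) div 2 ^ (n - t)"
      using kt by (intro vl_bits) auto
    show ?thesis using hit bl bs vv False u unfolding t_def by (simp add: qfC_big)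
  qed
qed

lemma queries_eq:
  "queries (qfC L n) (2 * L + n) x y =
   pathq L n (if ci L n x mod 2 ^ n = 0 then jF n y else ci L n x div 2 ^ n)
             (if ci L n x mod 2 ^ n = 0 then uF n y else ci L n x mod 2 ^ n)"
  unfolding queries_def pathq_def
  by (rule map_cong) (auto simp: query_eq)

lemma est_acc: "\<bar>estimate (qfC L n) (estC L n) (2 * L + n) x y - x\<bar> \<le> hh L n / 2"
proof -
  define i where "i = ci L n x"
  have c1: "real i * hh L n \<le> x" and c2: "x < real (i + 1) * hh L n" unfolding i_def using cell by auto
  have e: "estimate (qfC L n) (estC L n) (2 * L + n) x y = (real i + 1/2) * hh L n"
  proof (cases "i mod 2 ^ n = 0")
    case True
    have "hitp L (resps (qfC L n) x y (2 * L + n))" using hit_eq[of "2 * L + n"] True unfolding i_def by simp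
    moreover have "blk L (resps (qfC L n) x y (2 * L + n)) * 2 ^ n = i"
    proof -
      have "blk L (resps (qfC L n) x y (2 * L + n)) = i div 2 ^ n" using blk_eq[of "2 * L + n"] unfolding i_def by simp
      moreover have "i div 2 ^ n * 2 ^ n = i" using True div_mult_mod_eq[of i "2 ^ n"] by simp
      ultimately show ?thesis by simp
    qed
    ultimately show ?thesis unfolding estimate_def estC_def by simp
  next
    case False
    have "\<not> hitp L (resps (qfC L n) x y (2 * L + n))" using hit_eq[of "2 * L + n"] False unfolding i_def by simp
    moreover have bl: "blk L (resps (qfC L n) x y (2 * L + n)) = i div 2 ^ n"
      using blk_eq[of "2 * L + n"] unfolding i_def by simp
    moreover have "bitsr L (resps (qfC L n) x y (2 * L + n)) n = map (bitb n (i mod 2 ^ n)) [0..<n]"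
      unfolding bitsr_def using bits_resp[of _ "2 * L + n"] False unfolding i_def by simp
    moreover have "vl (map (bitb n (i mod 2 ^ n)) [0..<n]) = i mod 2 ^ n"
      using vl_bits[of n n "i mod 2 ^ n"] by simp
    moreover have "i div 2 ^ n * 2 ^ n + i mod 2 ^ n = i" by (rule div_mult_mod_eq)
    ultimately show ?thesis unfolding estimate_def estC_def by simp
  qed
  have "(real i + 1/2) * hh L n - x \<le> hh L n / 2" using c1 by (simp add: algebra_simps)
  moreover have "x - (real i + 1/2) * hh L n \<le> hh L n / 2" using c2 by (simp add: algebra_simps)
  ultimately show ?thesis unfolding e by linarith
qed

end

lemma hh_mult: "L \<ge> 1 \<Longrightarrow> real m * hh L n = real m / (real L * 2 ^ n)"
  unfolding hh_def by simp

lemma hh_lt1: "L \<ge> 1 \<Longrightarrow> m < L * 2 ^ n \<Longrightarrow> real m * hh L n < 1"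
proof -
  assume L: "L \<ge> 1" and m: "m < L * 2 ^ n"
  have "real m < real L * 2 ^ n" using m by (metis of_nat_less_iff of_nat_mult of_nat_numeral of_nat_power)
  moreover have "real L * 2 ^ n > 0" using L by simp
  ultimately show ?thesis unfolding hh_def by (simp add: field_simps)
qed

lemma hh_le1: "L \<ge> 1 \<Longrightarrow> m \<le> L * 2 ^ n \<Longrightarrow> real m * hh L n \<le> 1"
proof -
  assume L: "L \<ge> 1" and m: "m \<le> L * 2 ^ n"
  have "real m \<le> real L * 2 ^ n" using m by (metis of_nat_le_iff of_nat_mult of_nat_numeral of_nat_power)
  moreover have "real L * 2 ^ n > 0" using L by simp
  ultimately show ?thesis unfolding hh_def by (simp add: field_simps)
qed

lemma hh_pos': "L \<ge> 1 \<Longrightarrow> hh L n > 0" unfolding hh_def by simp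

lemma pq_range:
  assumes L: "L \<ge> 1" and n: "n \<ge> 1" and k: "k < 2 * L"
  shows "pq L n k \<in> {0..<1}"
proof (cases "k < L")
  case True
  have "k * 2 ^ n < L * 2 ^ n" using True by simp
  then have A: "real (k * 2 ^ n) * hh L n < 1" by (rule hh_lt1[OF L])
  have B: "0 \<le> real (k * 2 ^ n) * hh L n" using hh_pos'[OF L, of n] by simp
  show ?thesis unfolding pq_def using True A B by simp
next
  case False
  have "(2::nat) ^ n \<ge> 2" using n by (metis power_one_right power_increasing one_le_numeral)
  have "k - L + 1 \<le> L" using k False by simp
  then have "(k - L + 1) * 2 ^ n \<le> L * 2 ^ n" by (rule mult_right_mono) simp
  moreover have "(k - L + 1) * 2 ^ n = (k - L) * 2 ^ n + 2 ^ n" by (simp add: algebra_simps)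
  ultimately have "(k - L) * 2 ^ n + 1 < L * 2 ^ n" using \<open>2 ^ n \<ge> 2\<close> by linarith
  then have A: "real ((k - L) * 2 ^ n + 1) * hh L n < 1" by (rule hh_lt1[OF L])
  have B: "0 \<le> real ((k - L) * 2 ^ n + 1) * hh L n" using hh_pos'[OF L, of n] by simp
  show ?thesis unfolding pq_def using False A B by simp
qed

lemma gq_pos: "m \<ge> 1 \<Longrightarrow> gq m > 0" unfolding gq_def by auto
lemma gq_le: "gq m \<le> real m \<or> m = 0" unfolding gq_def by auto

lemma Qp_range:
  assumes L: "L \<ge> 1" and a: "a < L" and v: "v < 2 ^ t" and t: "t < n"
  shows "Qp L n a v t \<in> {0..<1}"
proof -
  define m where "m = mid n v t"
  have m1: "1 \<le> m" unfolding m_def by (rule mid_pos)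
  have mn: "m < 2 ^ n" unfolding m_def using mid_less[OF t v] .
  have g: "0 < gq m" "gq m \<le> real m" using gq_pos[OF m1] gq_le[of m] m1 by auto
  have "a * 2 ^ n + m < (a + 1) * 2 ^ n" using mn by simp
  also have "\<dots> \<le> L * 2 ^ n" using a by (intro mult_right_mono) auto
  finally have lt: "a * 2 ^ n + m < L * 2 ^ n" .
  have "Qp L n a v t \<le> real (a * 2 ^ n + m) * hh L n"
    unfolding Qp_def m_def[symmetric] using g hh_pos'[OF L, of n] by (intro mult_right_mono) auto
  also have "\<dots> < 1" using hh_lt1[OF L lt] .
  finally have "Qp L n a v t < 1" .
  moreover have "0 \<le> Qp L n a v t" unfolding Qp_def m_def[symmetric] using g less_imp_le[OF hh_pos'[OF L, of n]] by simp
  ultimately show ?thesis by simp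
qed

lemma blk_less: "L \<ge> 1 \<Longrightarrow> blk L rs < L"
proof -
  assume L: "L \<ge> 1"
  have "blk L rs \<le> card {1..<L}" unfolding blk_def by (rule card_mono) auto
  then show ?thesis using L by simp
qed

lemma jF_less: "y \<in> {1..L * 2 ^ n} \<Longrightarrow> jF n y < L"
  unfolding jF_def by (auto simp: div_less_iff_less_mult)

lemma uF_less: "uF n y < 2 ^ n" unfolding uF_def by simp

lemma div_pow_less: "b < 2 ^ n \<Longrightarrow> t \<le> n \<Longrightarrow> b div 2 ^ (n - t) < (2::nat) ^ t"
proof -
  assume b: "b < 2 ^ n" and t: "t \<le> n"
  have "(2::nat) ^ n = 2 ^ t * 2 ^ (n - t)" using t by (simp flip: power_add)
  then show ?thesis using b by (simp add: div_less_iff_less_mult)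
qed

lemma qfC_range:
  assumes L: "L \<ge> 1" and n: "n \<ge> 1" and k: "k < 2 * L + n" and y: "y \<in> {1..L * 2 ^ n}"
  shows "qfC L n k rs y \<in> {0..<1}"
proof (cases "k < 2 * L")
  case True then show ?thesis unfolding qfC_def using pq_range[OF L n True] by simp
next
  case False
  define t where "t = k - 2 * L"
  have t: "t < n" using k False unfolding t_def by simp
  show ?thesis
  proof (cases "hitp L rs")
    case True
    have "Qp L n (jF n y) (uF n y div 2 ^ (n - t)) t \<in> {0..<1}"
      by (rule Qp_range[OF L jF_less[OF y] div_pow_less[OF uF_less] t]) (use t in simp)
    then show ?thesis unfolding qfC_def using False True t_def by simp
  next
    case hf: False
    have "vl (bitsr L rs t) < 2 ^ t" using vl_less[of "bitsr L rs t"] unfolding bitsr_def by simp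
    then have "Qp L n (blk L rs) (vl (bitsr L rs t)) t \<in> {0..<1}"
      by (rule Qp_range[OF L blk_less[OF L] _ t])
    then show ?thesis unfolding qfC_def using False hf t_def by simp
  qed
qed

lemma estC_range:
  assumes L: "L \<ge> 1"
  shows "estC L n rs y \<in> {0..<1}"
proof -
  have b: "blk L rs < L" by (rule blk_less[OF L])
  have hp: "hh L n > 0" by (rule hh_pos'[OF L, of n])
  have vlb: "vl (bitsr L rs n) < 2 ^ n" using vl_less[of "bitsr L rs n"] unfolding bitsr_def by simp
  show ?thesis
  proof (cases "hitp L rs")
    case True
    have "blk L rs * 2 ^ n + 1 \<le> L * 2 ^ n"
    proof -
      have "(blk L rs + 1) * 2 ^ n \<le> L * 2 ^ n" using b by (intro mult_right_mono) auto
      moreover have "1 \<le> (2::nat) ^ n" by simp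
      moreover have "(blk L rs + 1) * 2 ^ n = blk L rs * 2 ^ n + 2 ^ n" by (simp add: algebra_simps)
      ultimately show ?thesis by linarith
    qed
    then have "real (blk L rs * 2 ^ n + 1) * hh L n \<le> 1" by (rule hh_le1[OF L])
    moreover have "(real (blk L rs * 2 ^ n) + 1/2) * hh L n < real (blk L rs * 2 ^ n + 1) * hh L n"
      using hp by (intro mult_strict_right_mono) auto
    ultimately have "(real (blk L rs * 2 ^ n) + 1/2) * hh L n < 1" by linarith
    moreover have "0 \<le> (real (blk L rs * 2 ^ n) + 1/2) * hh L n" using hp by simp
    ultimately show ?thesis unfolding estC_def using True by simp
  next
    case False
    have "blk L rs * 2 ^ n + vl (bitsr L rs n) + 1 \<le> L * 2 ^ n"
    proof -
      have "(blk L rs + 1) * 2 ^ n \<le> L * 2 ^ n" using b by (intro mult_right_mono) auto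
      then show ?thesis using vlb by (simp add: algebra_simps)
    qed
    then have "real (blk L rs * 2 ^ n + vl (bitsr L rs n) + 1) * hh L n \<le> 1" by (rule hh_le1[OF L])
    moreover have "(real (blk L rs * 2 ^ n + vl (bitsr L rs n)) + 1/2) * hh L n
        < real (blk L rs * 2 ^ n + vl (bitsr L rs n) + 1) * hh L n"
      using hp by (intro mult_strict_right_mono) auto
    ultimately have "(real (blk L rs * 2 ^ n + vl (bitsr L rs n)) + 1/2) * hh L n < 1" by linarith
    moreover have "0 \<le> (real (blk L rs * 2 ^ n + vl (bitsr L rs n)) + 1/2) * hh L n" using hp by simp
    ultimately show ?thesis unfolding estC_def using False by simp
  qed
qed

definition Pn :: "nat \<Rightarrow> nat \<Rightarrow> nat \<Rightarrow> nat" where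
  "Pn L n k = (if k < L then k * 2 ^ n else (k - L) * 2 ^ n + 1)"

lemma pq_Pn: "pq L n k = real (Pn L n k) * hh L n"
  unfolding pq_def Pn_def by simp

lemma Pn_mod: "n \<ge> 1 \<Longrightarrow> Pn L n k mod 2 ^ n = (if k < L then 0 else 1)"
proof -
  assume n: "n \<ge> 1"
  have "(2::nat) ^ n \<ge> 2" using n by (metis power_one_right power_increasing one_le_numeral)
  have "((k - L) * 2 ^ n + 1) mod 2 ^ n = 1 mod 2 ^ n" by (rule mod_mult_self3)
  also have "\<dots> = 1" using n by simp
  finally show ?thesis unfolding Pn_def using n by simp
qed

lemma Pn_div: "n \<ge> 1 \<Longrightarrow> Pn L n k div 2 ^ n = (if k < L then k else k - L)"
proof -
  assume n: "n \<ge> 1"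
  have "(2::nat) ^ n \<ge> 2" using n by (metis power_one_right power_increasing one_le_numeral)
  have "((k - L) * 2 ^ n + 1) div 2 ^ n = (k - L) + 1 div 2 ^ n" by (rule div_mult_self3) simp
  also have "\<dots> = k - L" using \<open>2 ^ n \<ge> 2\<close> by simp
  finally show ?thesis unfolding Pn_def by simp
qed

lemma Pn_inj: "n \<ge> 1 \<Longrightarrow> k < 2 * L \<Longrightarrow> k' < 2 * L \<Longrightarrow> Pn L n k = Pn L n k' \<Longrightarrow> k = k'"
proof -
  assume n: "n \<ge> 1" and k: "k < 2 * L" and k': "k' < 2 * L" and e: "Pn L n k = Pn L n k'"
  have m: "(if k < L then 0 else 1) = (if k' < L then 0 else (1::nat))" using Pn_mod[OF n, of L k] Pn_mod[OF n, of L k'] e by simp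
  have d: "(if k < L then k else k - L) = (if k' < L then k' else k' - L)" using Pn_div[OF n, of L k] Pn_div[OF n, of L k'] e by simp
  show "k = k'" using m d k k' by (auto split: if_splits)
qed

lemma half_ne: "real (p::nat) \<noteq> real q + 1/2"
proof
  assume "real p = real q + 1/2"
  then have "real (2 * p) = real (2 * q + 1)" by simp
  then have "2 * p = 2 * q + 1" by (simp only: of_nat_eq_iff)
  then show False by presburger
qed

lemma gq_inj: "1 \<le> m \<Longrightarrow> 1 \<le> m' \<Longrightarrow> gq m = gq m' \<Longrightarrow> m = m'"
  unfolding gq_def by (auto split: if_splits)

lemma pathq_distinct:
  assumes L: "L \<ge> 1" and n: "n \<ge> 1" and a: "a < L" and b: "b < 2 ^ n"
  shows "distinct (pathq L n a b)"
proof -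
  define M where "M t = mid n (b div 2 ^ (n - t)) t" for t
  have M1: "1 \<le> M t" for t unfolding M_def by (rule mid_pos)
  have Mlt: "M t < 2 ^ n" if "t < n" for t
    unfolding M_def using mid_less[OF that div_pow_less[OF b]] that by simp
  define R where "R k = (if k < 2 * L then real (Pn L n k) else real (a * 2 ^ n) + gq (M (k - 2 * L)))" for k
  have nth: "pathq L n a b ! k = R k * hh L n" if "k < 2 * L + n" for k
    using that unfolding pathq_def R_def M_def by (simp add: pq_Pn Qp_def)
  have hp: "hh L n > 0" by (rule hh_pos'[OF L])
  have n2: "(2::nat) ^ n \<ge> 2" using n by (metis power_one_right power_increasing one_le_numeral)
  have Rinj: "k = k'" if k: "k < 2 * L + n" and k': "k' < 2 * L + n" and e: "R k = R k'" for k k'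
  proof -
    have pair_path: False if p: "p < 2 * L" and q: "\<not> q < 2 * L" "q < 2 * L + n"
        and e: "real (Pn L n p) = real (a * 2 ^ n) + gq (M (q - 2 * L))" for p q
    proof (cases "M (q - 2 * L) = 1")
      case True
      then show False using e half_ne[of "Pn L n p" "a * 2 ^ n"] unfolding gq_def by simp
    next
      case False
      then have "real (Pn L n p) = real (a * 2 ^ n + M (q - 2 * L))" using e unfolding gq_def by simp
      then have "Pn L n p = a * 2 ^ n + M (q - 2 * L)" by (simp only: of_nat_eq_iff)
      then have "Pn L n p mod 2 ^ n = M (q - 2 * L) mod 2 ^ n" by simp
      also have "\<dots> = M (q - 2 * L)" using Mlt[of "q - 2 * L"] q by simp
      finally show False using Pn_mod[OF n, of L p] False M1[of "q - 2 * L"] by (auto split: if_splits)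
    qed
    show ?thesis
    proof (cases "k < 2 * L")
      case True
      show ?thesis
      proof (cases "k' < 2 * L")
        case True
        then show ?thesis using Pn_inj[OF n \<open>k < 2 * L\<close> True] e unfolding R_def using \<open>k < 2 * L\<close> by simp
      next
        case False
        then show ?thesis using pair_path[of k k'] \<open>k < 2 * L\<close> e k' unfolding R_def by simp
      qed
    next
      case kF: False
      show ?thesis
      proof (cases "k' < 2 * L")
        case True
        then show ?thesis using pair_path[of k' k] kF e k unfolding R_def by simp
      next
        case False
        define t where "t = k - 2 * L"
        define t' where "t' = k' - 2 * L"
        have tn: "t < n" "t' < n" using k k' kF False unfolding t_def t'_def by auto
        have "gq (M t) = gq (M t')" using e kF False unfolding R_def t_def t'_def by simp
        then have "M t = M t'" using gq_inj M1 by blast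
        then have "(2 * (b div 2 ^ (n - t)) + 1) * 2 ^ (n - Suc t) = (2 * (b div 2 ^ (n - t')) + 1) * 2 ^ (n - Suc t')"
          unfolding M_def using mid_odd[OF tn(1)] mid_odd[OF tn(2)] by simp
        then have "n - Suc t = n - Suc t'" by (rule odd_pow_inj)
        then have "t = t'" using tn by simp
        then show ?thesis using kF False unfolding t_def t'_def by simp
      qed
    qed
  qed
  show ?thesis
  proof (rule distinct_conv_nth[THEN iffD2], intro allI impI)
    fix i j assume i: "i < length (pathq L n a b)" and j: "j < length (pathq L n a b)" and ij: "i \<noteq> j"
    have i': "i < 2 * L + n" and j': "j < 2 * L + n" using i j unfolding pathq_def by auto
    show "pathq L n a b ! i \<noteq> pathq L n a b ! j"
    proof
      assume "pathq L n a b ! i = pathq L n a b ! j"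
      then have "R i * hh L n = R j * hh L n" using nth[OF i'] nth[OF j'] by simp
      then have "R i = R j" using hp by simp
      then show False using Rinj[OF i' j'] ij by simp
    qed
  qed
qed

lemma cover_ge:
  fixes E :: "real set" and z :: "nat \<Rightarrow> real"
  assumes E: "E \<subseteq> {0..<1}" and d: "\<delta> > 0" and zE: "\<And>p. p < L \<Longrightarrow> z p \<in> E"
    and gap: "\<And>p p'. p < p' \<Longrightarrow> p' < L \<Longrightarrow> z p + \<delta> < z p'"
  shows "L \<le> cover_number \<delta> E"
proof -
  have cprop: "L \<le> K" if cv: "coverable \<delta> K E" for K
  proof -
    obtain a b where ab: "\<forall>i<K. a i \<le> b i \<and> b i - a i \<le> \<delta>" "E \<subseteq> (\<Union>i<K. {a i..b i})"
      using cv unfolding coverable_def by blast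
    have "\<forall>p\<in>{..<L}. \<exists>i. i < K \<and> z p \<in> {a i..b i}" using zE ab(2) by blast
    then obtain idx where idx: "\<forall>p\<in>{..<L}. idx p < K \<and> z p \<in> {a (idx p)..b (idx p)}"
      by metis
    have close: "False" if p: "p < p'" "p' < L" "idx p = idx p'" for p p'
    proof -
      have pL: "p < L" using p by simp
      have "z p \<in> {a (idx p)..b (idx p)}" using idx pL by blast
      moreover have "z p' \<in> {a (idx p')..b (idx p')}" using idx p(2) by blast
      then have "z p' \<in> {a (idx p)..b (idx p)}" using p(3) by simp
      moreover have "idx p < K" using idx pL by blast
      then have "b (idx p) - a (idx p) \<le> \<delta>" using ab(1) by blast
      moreover have "z p + \<delta> < z p'" using gap p by auto
      ultimately show False by auto
    qed
    have inj: "inj_on idx {..<L}"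
    proof (rule inj_onI)
      fix p p' assume p: "p \<in> {..<L}" "p' \<in> {..<L}" "idx p = idx p'"
      show "p = p'"
      proof (rule ccontr)
        assume "p \<noteq> p'"
        then consider "p < p'" | "p' < p" by linarith
        then show False
        proof cases
          case 1 then show False using close[of p p'] p by auto
        next
          case 2 then show False using close[of p' p] p by auto
        qed
      qed
    qed
    have sub: "idx ` {..<L} \<subseteq> {..<K}" using idx by auto
    have "card {..<L} \<le> card {..<K}" by (rule card_inj_on_le[OF inj sub]) simp
    then show ?thesis by simp
  qed
  define K0 where "K0 = nat \<lceil>1 / \<delta>\<rceil>"
  have "coverable \<delta> K0 E"
  proof -
    have "E \<subseteq> (\<Union>i<K0. {real i * \<delta>..(real i + 1) * \<delta>})"
    proof
      fix x assume "x \<in> E"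
      then have x: "0 \<le> x" "x < 1" using E by auto
      define i where "i = nat \<lfloor>x / \<delta>\<rfloor>"
      have f0: "0 \<le> \<lfloor>x / \<delta>\<rfloor>" using x d by simp
      have ri: "real i = of_int \<lfloor>x / \<delta>\<rfloor>" using f0 unfolding i_def by simp
      have a: "real i \<le> x / \<delta>" unfolding ri by (rule of_int_floor_le)
      have b: "x / \<delta> < real i + 1" unfolding ri by (rule real_of_int_floor_add_one_gt)
      have c1: "real i * \<delta> \<le> x" using a d by (simp add: field_simps)
      have c2: "x \<le> (real i + 1) * \<delta>" using b d by (simp add: field_simps)
      have "x / \<delta> < 1 / \<delta>" using x d by (simp add: divide_strict_right_mono)
      also have "\<dots> \<le> of_int \<lceil>1 / \<delta>\<rceil>" by (rule le_of_int_ceiling)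
      finally have "of_int \<lfloor>x / \<delta>\<rfloor> < (of_int \<lceil>1 / \<delta>\<rceil> :: real)" using a ri by linarith
      then have "\<lfloor>x / \<delta>\<rfloor> < \<lceil>1 / \<delta>\<rceil>" by (simp only: of_int_less_iff)
      then have "i < K0" unfolding i_def K0_def using f0 d by (simp add: nat_less_eq_zless)
      then show "x \<in> (\<Union>i<K0. {real i * \<delta>..(real i + 1) * \<delta>})" using c1 c2 by auto
    qed
    then show ?thesis unfolding coverable_def using d
      by (intro exI[of _ "\<lambda>i. real i * \<delta>"] exI[of _ "\<lambda>i. (real i + 1) * \<delta>"]) (auto simp: algebra_simps)
  qed
  then have "coverable \<delta> (cover_number \<delta> E) E" unfolding cover_number_def by (rule LeastI)
  then show ?thesis by (rule cprop)
qed

lemma queries_param: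
  assumes L: "L \<ge> 1" and n: "n \<ge> 1" and x: "x \<in> {0..<1}" and y: "y \<in> {1..L * 2 ^ n}"
  shows "\<exists>A B. A < L \<and> B < 2 ^ n \<and> queries (qfC L n) (2 * L + n) x y = pathq L n A B"
proof -
  have x0: "0 \<le> x" and x1: "x < 1" using x by auto
  have q: "queries (qfC L n) (2 * L + n) x y =
   pathq L n (if ci L n x mod 2 ^ n = 0 then jF n y else ci L n x div 2 ^ n)
             (if ci L n x mod 2 ^ n = 0 then uF n y else ci L n x mod 2 ^ n)"
    by (rule queries_eq[OF L n x0 x1])
  have "ci L n x div 2 ^ n < L" using ci_less[OF L n x0 x1] by (simp add: div_less_iff_less_mult)
  then have "(if ci L n x mod 2 ^ n = 0 then jF n y else ci L n x div 2 ^ n) < L"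
    using jF_less[OF y] by simp
  moreover have "(if ci L n x mod 2 ^ n = 0 then uF n y else ci L n x mod 2 ^ n) < 2 ^ n"
    using uF_less by simp
  ultimately show ?thesis using q by blast
qed

lemma construct:
  assumes eps: "\<epsilon> > 0" and d: "\<delta> > 0" "\<delta> \<le> 1 / real L" and L: "L \<ge> 2" and n: "n \<ge> 1"
    and hle: "hh L n \<le> \<epsilon>"
  shows "is_private \<epsilon> \<delta> L (2 * L + n) (L * 2 ^ n) (qfC L n) (estC L n)"
proof -
  have L1: "L \<ge> 1" using L by simp
  have hp: "hh L n > 0" by (rule hh_pos'[OF L1])
  have strat: "is_strategy (2 * L + n) (L * 2 ^ n) (qfC L n) (estC L n)"
    unfolding is_strategy_def
  proof (intro conjI ballI allI impI)
    show "1 \<le> L * 2 ^ n" using L1 by simp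
  next
    fix k rs y assume "k < 2 * L + n" "y \<in> {1..L * 2 ^ n}"
    then show "qfC L n k rs y \<in> {0..<1}" by (rule qfC_range[OF L1 n])
  next
    fix rs y show "estC L n rs y \<in> {0..<1}" by (rule estC_range[OF L1])
  next
    fix x :: real and y :: nat assume x: "x \<in> {0..<1}" and y: "y \<in> {1..L * 2 ^ n}"
    obtain A B where AB: "A < L" "B < 2 ^ n" "queries (qfC L n) (2 * L + n) x y = pathq L n A B"
      using queries_param[OF L1 n x y] by blast
    show "distinct (queries (qfC L n) (2 * L + n) x y)" unfolding AB(3)
      by (rule pathq_distinct[OF L1 n AB(1,2)])
  qed
  have acc: "\<forall>x\<in>{0..<1}. \<forall>y\<in>{1..L * 2 ^ n}.
      \<bar>estimate (qfC L n) (estC L n) (2 * L + n) x y - x\<bar> \<le> \<epsilon> / 2"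
  proof (intro ballI)
    fix x :: real and y :: nat assume x: "x \<in> {0..<1}" and y: "y \<in> {1..L * 2 ^ n}"
    have "\<bar>estimate (qfC L n) (estC L n) (2 * L + n) x y - x\<bar> \<le> hh L n / 2"
      using est_acc[OF L1 n] x by auto
    then show "\<bar>estimate (qfC L n) (estC L n) (2 * L + n) x y - x\<bar> \<le> \<epsilon> / 2" using hle by linarith
  qed
  define C where "C = (2 ^ n + 1 / real L) * hh L n"
  define z where "z p = real p * C" for p
  have twon: "(2::real) ^ n * hh L n = 1 / real L" unfolding hh_def using L1 by simp
  have Cgt: "C > 1 / real L" unfolding C_def using twon hp L1 by (simp add: algebra_simps)
  have zform: "z p = (real (p * 2 ^ n) + real p / real L) * hh L n" for p
    unfolding z_def C_def by (simp add: algebra_simps)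
  have zrange: "z p \<in> {0..<1}" "real (p * 2 ^ n) * hh L n \<le> z p" "z p < real (p * 2 ^ n + 1) * hh L n"
    if p: "p < L" for p
  proof -
    have pl: "real p / real L < 1" using p L1 by simp
    have pl0: "0 \<le> real p / real L" by simp
    show "real (p * 2 ^ n) * hh L n \<le> z p" unfolding zform using hp pl0 by (simp add: algebra_simps)
    have "real (p * 2 ^ n) + real p / real L < real (p * 2 ^ n + 1)" using pl by simp
    then show "z p < real (p * 2 ^ n + 1) * hh L n" unfolding zform using hp
      by (rule mult_strict_right_mono)
    have "p * 2 ^ n + 1 \<le> L * 2 ^ n"
    proof -
      have "(p + 1) * 2 ^ n \<le> L * 2 ^ n" using p by (intro mult_right_mono) auto
      moreover have "(p + 1) * 2 ^ n = p * 2 ^ n + 2 ^ n" by (simp add: algebra_simps)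
      moreover have "(1::nat) \<le> 2 ^ n" by simp
      ultimately show ?thesis by linarith
    qed
    then have "real (p * 2 ^ n + 1) * hh L n \<le> 1" by (rule hh_le1[OF L1])
    moreover have "0 \<le> z p" unfolding zform using hp pl0 by simp
    ultimately show "z p \<in> {0..<1}" using \<open>z p < real (p * 2 ^ n + 1) * hh L n\<close> by simp
  qed
  have zci: "ci L n (z p) = p * 2 ^ n" if p: "p < L" for p
  proof -
    have z0: "0 \<le> z p" "z p < 1" using zrange(1)[OF p] by auto
    have "p * 2 ^ n \<le> ci L n (z p)" using key[OF L1 n z0, of "p * 2 ^ n"] zrange(2)[OF p] by simp
    moreover have "\<not> p * 2 ^ n + 1 \<le> ci L n (z p)" using key[OF L1 n z0, of "p * 2 ^ n + 1"] zrange(3)[OF p] by simp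
    ultimately show ?thesis by simp
  qed
  have zgap: "z p + \<delta> < z p'" if "p < p'" for p p'
  proof -
    have "1 \<le> real p' - real p" using that by simp
    moreover have "C > 0" using Cgt L1 by (smt (verit) of_nat_0_le_iff zero_le_divide_1_iff)
    ultimately have "1 * C \<le> (real p' - real p) * C" by (intro mult_right_mono) auto
    then have "C \<le> (real p' - real p) * C" by simp
    then have "C \<le> z p' - z p" unfolding z_def by (simp add: algebra_simps)
    then show ?thesis using Cgt d(2) by linarith
  qed
  have cover: "\<forall>x\<in>{0..<1}. \<forall>qs\<in>Qset (qfC L n) (2 * L + n) (L * 2 ^ n) x.
      L \<le> cover_number \<delta> (info_set (qfC L n) (2 * L + n) (L * 2 ^ n) qs)"
  proof (intro ballI)
    fix x :: real and qs assume x: "x \<in> {0..<1}" and qs: "qs \<in> Qset (qfC L n) (2 * L + n) (L * 2 ^ n) x"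
    obtain y where y: "y \<in> {1..L * 2 ^ n}" "queries (qfC L n) (2 * L + n) x y = qs"
      using qs unfolding Qset_def by blast
    obtain A B where AB: "A < L" "B < 2 ^ n" "qs = pathq L n A B"
      using queries_param[OF L1 n x y(1)] y(2) by metis
    define y' where "y' = A * 2 ^ n + B + 1"
    have y'r: "y' \<in> {1..L * 2 ^ n}"
    proof -
      have "(A + 1) * 2 ^ n \<le> L * 2 ^ n" using AB(1) by (intro mult_right_mono) auto
      then show ?thesis unfolding y'_def using AB(2) by (simp add: algebra_simps)
    qed
    have jF': "jF n y' = A" unfolding jF_def y'_def using AB(2) by simp
    have uF': "uF n y' = B" unfolding uF_def y'_def using AB(2) by simp
    show "L \<le> cover_number \<delta> (info_set (qfC L n) (2 * L + n) (L * 2 ^ n) qs)"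
    proof (rule cover_ge[OF _ d(1), of _ L z])
      show "info_set (qfC L n) (2 * L + n) (L * 2 ^ n) qs \<subseteq> {0..<1}" unfolding info_set_def by auto
    next
      fix p assume p: "p < L"
      have z0: "0 \<le> z p" "z p < 1" using zrange(1)[OF p] by auto
      have "queries (qfC L n) (2 * L + n) (z p) y' = pathq L n (jF n y') (uF n y')"
        using queries_eq[OF L1 n z0, of y'] zci[OF p] by simp
      then have "queries (qfC L n) (2 * L + n) (z p) y' = qs" using AB(3) jF' uF' by simp
      then show "z p \<in> info_set (qfC L n) (2 * L + n) (L * 2 ^ n) qs"
        unfolding info_set_def Qset_def using y'r zrange(1)[OF p] by blast
    next
      fix p p' assume "p < p'" "p' < L"
      then show "z p + \<delta> < z p'" using zgap by simp
    qed
  qed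
  show ?thesis unfolding is_private_def using strat acc cover by blast
qed

theorem theorem1:
  fixes \<epsilon> \<delta> :: real and L :: nat
  assumes "\<epsilon> > 0" and "\<delta> > 0" and "L \<ge> 2" and "2 * \<epsilon> < \<delta>" and "\<delta> \<le> 1 / real L"
  shows "(\<exists>N Yc qf est. is_private \<epsilon> \<delta> L N Yc qf est)
    \<and> max \<lceil>log 2 (1 / \<epsilon>)\<rceil> (\<lceil>log 2 (\<delta> / \<epsilon>)\<rceil> + 2 * int L - 4) \<le> int (Nstar \<epsilon> \<delta> L)
    \<and> int (Nstar \<epsilon> \<delta> L) \<le> \<lceil>log 2 (1 / (real L * \<epsilon>))\<rceil> + 2 * int L"
proof -
  note eps = assms(1) and dpos = assms(2) and L = assms(3) and ed = assms(4) and dL = assms(5)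
  have L1: "L \<ge> 1" using L by simp
  have Lpos: "real L > 0" using L by simp
  have Lr: "real L \<ge> 2" using L by simp
  define X where "X = 1 / (real L * \<epsilon>)"
  have "2 * \<epsilon> * real L < \<delta> * real L" using ed Lpos by simp
  also have "\<delta> * real L \<le> 1" using dL Lpos by (simp add: field_simps)
  finally have Le: "2 * (real L * \<epsilon>) < 1" by (simp add: algebra_simps)
  have Lepos: "real L * \<epsilon> > 0" using Lpos eps by simp
  have X2: "X > 2" unfolding X_def using Le Lepos by (simp add: field_simps)
  have "2 powr (1::real) < X" using X2 by simp
  then have lg: "1 < log 2 X" using X2 by (subst less_log_iff) auto
  define c where "c = \<lceil>log 2 X\<rceil>"
  have c1: "c \<ge> 1" unfolding c_def using lg by linarith
  define n0 where "n0 = nat c"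
  have rn0: "real n0 = of_int c" unfolding n0_def using c1 by simp
  have n0: "n0 \<ge> 1" unfolding n0_def using c1 by simp
  have "log 2 X \<le> real n0" unfolding rn0 c_def by (rule le_of_int_ceiling)
  then have "X \<le> 2 powr real n0" using X2 by (subst (asm) log_le_iff) auto
  then have X2n: "X \<le> 2 ^ n0" by (simp add: powr_realpow)
  have hle: "hh L n0 \<le> \<epsilon>"
  proof -
    have "1 \<le> real L * \<epsilon> * 2 ^ n0" using X2n Lepos unfolding X_def by (simp add: field_simps)
    then show ?thesis unfolding hh_def using Lpos eps by (simp add: field_simps)
  qed
  have priv0: "is_private \<epsilon> \<delta> L (2 * L + n0) (L * 2 ^ n0) (qfC L n0) (estC L n0)"
    by (rule construct[OF eps dpos dL L n0 hle])
  have ex: "\<exists>N Yc qf est. is_private \<epsilon> \<delta> L N Yc qf est" using priv0 by blast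
  have Nle: "Nstar \<epsilon> \<delta> L \<le> 2 * L + n0"
    unfolding Nstar_def by (rule Least_le) (use priv0 in blast)
  have "\<exists>Yc qf est. is_private \<epsilon> \<delta> L (Nstar \<epsilon> \<delta> L) Yc qf est"
    unfolding Nstar_def by (rule LeastI_ex) (use ex in blast)
  then obtain Yc qf est where priv: "is_private \<epsilon> \<delta> L (Nstar \<epsilon> \<delta> L) Yc qf est" by blast
  have d1: "\<delta> \<le> 1" using dL Lr by (smt (verit) divide_le_eq_1 of_nat_0_le_iff)
  note lb = lower_bounds[OF priv eps ed L d1]
  have up: "int (Nstar \<epsilon> \<delta> L) \<le> \<lceil>log 2 (1 / (real L * \<epsilon>))\<rceil> + 2 * int L"
  proof -
    have "int (Nstar \<epsilon> \<delta> L) \<le> int (2 * L + n0)" using Nle by simp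
    also have "\<dots> = c + 2 * int L" unfolding n0_def using c1 by simp
    finally show ?thesis unfolding c_def X_def .
  qed
  show ?thesis using ex lb up by simp
qed

end
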